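(* Let $(\mathrm{LinearP})$ be the problem $$\min\Big\{\mathbf{f}^\top\mathbf{x}+\sum_{s\in S}p_s\mathbf{q}_s^\top\mathbf{y}_s : A\mathbf{x}\le\mathbf{b},\ \mathbf{x}\in\mathbb{R}^{n_1}_+,\ \mathbf{y}_s\in\mathbb{R}^{n_2}_+,\ T_s\mathbf{x}+W_s\mathbf{y}_s\ge\mathbf{h}_s\ \forall s,\ \operatorname{CVaR}_\alpha(\mathbf{c}^\top\hat{\mathbf{G}}(\mathbf{x},\mathbf{y}))\le\operatorname{CVaR}_\alpha(\mathbf{c}^\top\mathbf{Z})\ \forall\mathbf{c}\in\mathcal{C}\Big\}$$ and $(\mathrm{LinearD})$ the problem of maximizing $$-\int_{\mathcal{C}}\operatorname{CVaR}_\alpha(\mathbf{c}^\top\mathbf{Z})\,\mu(\mathrm{d}\mathbf{c})-\boldsymbol\lambda^\top\mathbf{b}+\sum_{s\in S}p_s\boldsymbol\pi_s^\top\mathbf{h}_s$$ over $\boldsymbol\lambda\in\mathbb{R}^{m_1}_+$, $\mu\in\mathcal{M}^F_+(\mathcal{C})$, $\nu:\Omega\to\mathcal{M}^F_+(\mathcal{C})$, $\boldsymbol\pi_s\in\mathbb{R}^{m_2}_+$ ($s\in S$) subject to: (1) $\sum_{s}p_s\nu(\omega_s)=\mu$; (2) $\nu(\omega_s)\le\frac{\mu}{1-\alpha}$ (setwise) for all $s\in S$; (3) $\sum_s p_s\boldsymbol\pi_s^\top T_s-\sum_s p_s\int_{\mathcal{C}}\mathbf{c}^\top\bar{\mathbf{g}}_s\,[\nu(\omega_s)](\mathrm{d}\mathbf{c})\le\mathbf{f}^\top+\boldsymbol\lambda^\top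 A$; (4) $\boldsymbol\pi_s^\top W_s-\int_{\mathcal{C}}\mathbf{c}^\top\tilde{\mathbf{g}}_s\,[\nu(\omega_s)](\mathrm{d}\mathbf{c})\le\mathbf{q}_s^\top$ for all $s\in S$. Then $(\mathrm{LinearP})$ has a finite optimum value if and only if $(\mathrm{LinearD})$ does, in which case the two optimum values coincide. Moreover, a feasible solution $(\mathbf{x},\mathbf{y})$ of $(\mathrm{LinearP})$ and a feasible solution $(\boldsymbol\lambda,\mu,\nu,\boldsymbol\pi)$ of $(\mathrm{LinearD})$ are both optimal if and only if: (i) $\operatorname{support}(\mu)\subset\{\mathbf{c}:\operatorname{CVaR}_\alpha(\mathbf{c}^\top\hat{\mathbf{G}}(\mathbf{x},\mathbf{y}))=\operatorname{CVaR}_\alpha(\mathbf{c}^\top\mathbf{Z})\}$; (ii) $\operatorname{support}(\nu(\omega_s))\subset\{\mathbf{c}:\operatorname{VaR}_\alpha(\mathbf{c}^\top\hat{\mathbf{G}}(\mathbf{x},\mathbf{y}))\le\mathbf{c}^\top\hat{\mathbf{g}}_s(\mathbf{x},\mathbf{y}_s)\}$ for all $s\in S$; (iii) $\operatorname{support}(\frac{\mu}{1-\alpha}-\nu(\omega_s))\subset\{\mathbf{c}:\operatorname{VaR}_\alpha(\mathbf{c}^\top\hat{\mathbf{G}}(\mathbf{x},\mathbf{y}))\ge\mathbf{c}^\top\hat{\mathbf{g}}_s(\mathbf{x},\mathbf{y}_s)\}$ for all $s\in S$; (iv) $\boldsymbol\lambda^\top(\mathbf{b}-A\mathbf{x})=0$;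 (v) $\boldsymbol\pi_s^\top(T_s\mathbf{x}+W_s\mathbf{y}_s-\mathbf{h}_s)=0$ for all $s\in S$; (vi) $\big(\mathbf{f}^\top+\boldsymbol\lambda^\top A-\sum_sp_s\boldsymbol\pi_s^\top T_s+\sum_sp_s\int_{\mathcal{C}}\mathbf{c}^\top\bar{\mathbf{g}}_s\,[\nu(\omega_s)](\mathrm{d}\mathbf{c})\big)\mathbf{x}=0$; (vii) $\big(\mathbf{q}_s^\top-\boldsymbol\pi_s^\top W_s+\int_{\mathcal{C}}\mathbf{c}^\top\tilde{\mathbf{g}}_s\,[\nu(\omega_s)](\mathrm{d}\mathbf{c})\big)\mathbf{y}_s=0$ for all $s\in S$.
   Context: Finite probability space $\Omega=\{\omega_1,\dots,\omega_m\}$, $\Pi(\omega_s)=p_s>0$, $S=\{1,\dots,m\}$; smaller values are preferred. $\operatorname{CVaR}_\alpha(V)=\min_{\eta\in\mathbb{R}}\{\eta+\frac{1}{1-\alpha}\mathbb{E}[(V-\eta)_+]\}$ for $\alpha\in[0,1)$; $\operatorname{VaR}_\alpha(V)=\min\{t:\Pi(V\le t)\ge\alpha\}$. Benchmark $\mathbf{Z}$: random vector in $\mathbb{R}^d$ with finitely many realizations. $\mathcal{C}$: nonempty polyhedron contained in the unit simplex of $\mathbb{R}^d$. $\mathcal{M}^F_+(\mathcal{C})$: the set of finitely supported finite nonnegative measures on $\mathcal{C}$; for such $\mu$, $\operatorname{support}(\mu)=\{\mathbf{c}\in\mathcal{C}:\mu(\{\mathbf{c}\})>0\}$ and $\int_{\mathcal{C}}u(\mathbf{c})\mu(\mathrm{d}\mathbf{c})=\sum_{\mathbf{c}\in\operatorname{support}(\mu)}u(\mathbf{c})\mu(\{\mathbf{c}\})$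 (for vector-valued $u$, componentwise). Data: $A\in\mathbb{R}^{m_1\times n_1}$, $\mathbf{b}\in\mathbb{R}^{m_1}$, $\mathbf{f}\in\mathbb{R}^{n_1}$; for each $s$: $\mathbf{q}_s\in\mathbb{R}^{n_2}$, $T_s\in\mathbb{R}^{m_2\times n_1}$, $W_s\in\mathbb{R}^{m_2\times n_2}$, $\mathbf{h}_s\in\mathbb{R}^{m_2}$, $\bar{\mathbf{g}}_s\in\mathbb{R}^{d\times n_1}$, $\tilde{\mathbf{g}}_s\in\mathbb{R}^{d\times n_2}$, $\hat{\mathbf{g}}_s(\mathbf{x},\mathbf{y}_s)=\bar{\mathbf{g}}_s\mathbf{x}+\tilde{\mathbf{g}}_s\mathbf{y}_s$. $\hat{\mathbf{G}}(\mathbf{x},\mathbf{y})$ is the random vector with value $\hat{\mathbf{g}}_s(\mathbf{x},\mathbf{y}_s)$ at $\omega_s$. *)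

theory Defs
  imports "HOL-Analysis.Analysis"
begin

text \<open>Random variables on a finite probability space with weights P (indexed by a finite type)
  are functions on that type. CVaR exactly as in the paper (the minimum is an infimum, attained).\<close>
definition cvar :: "('a::finite \<Rightarrow> real) \<Rightarrow> real \<Rightarrow> ('a \<Rightarrow> real) \<Rightarrow> real" where
  "cvar P \<alpha> V = Inf ((\<lambda>\<eta>. \<eta> + (1 / (1 - \<alpha>)) * (\<Sum>s\<in>UNIV. P s * max (V s - \<eta>) 0)) ` UNIV)"

text \<open>VaR: min {t. Prob(V \<le> t) \<ge> \<alpha>}, taken in the extended reals (equals -\<infinity> when \<alpha> = 0).\<close>
definition var :: "('a::finite \<Rightarrow> real) \<Rightarrow> real \<Rightarrow> ('a \<Rightarrow> real) \<Rightarrow> ereal" where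
  "var P \<alpha> V = Inf {ereal t | t. \<alpha> \<le> (\<Sum>s\<in>{s. V s \<le> t}. P s)}"

definition unit_simplex :: "(real^'d) set" where
  "unit_simplex = {c. (\<forall>i. 0 \<le> c $ i) \<and> (\<Sum>i\<in>UNIV. c $ i) = 1}"

text \<open>Finitely supported measures on a set C, represented by their point masses.\<close>
definition fsupp :: "('a \<Rightarrow> real) \<Rightarrow> 'a set" where
  "fsupp \<mu> = {c. \<mu> c \<noteq> 0}"

definition fin_meas :: "'a set \<Rightarrow> ('a \<Rightarrow> real) \<Rightarrow> bool" where
  "fin_meas C \<mu> \<longleftrightarrow> (\<forall>c. 0 \<le> \<mu> c) \<and> finite (fsupp \<mu>) \<and> fsupp \<mu> \<subseteq> C"

definition msr :: "('a \<Rightarrow> real) \<Rightarrow> 'a set \<Rightarrow> real" where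
  "msr \<mu> B = sum \<mu> (B \<inter> fsupp \<mu>)"

definition support :: "'a set \<Rightarrow> ('a \<Rightarrow> real) \<Rightarrow> 'a set" where
  "support C \<mu> = {c \<in> C. \<mu> c > 0}"

definition fint :: "('a \<Rightarrow> real) \<Rightarrow> ('a \<Rightarrow> 'b::real_vector) \<Rightarrow> 'b" where
  "fint \<mu> u = (\<Sum>c\<in>fsupp \<mu>. \<mu> c *\<^sub>R u c)"

definition ghat :: "('s \<Rightarrow> real^'n1^'d) \<Rightarrow> ('s \<Rightarrow> real^'n2^'d) \<Rightarrow> real^'n1 \<Rightarrow> ('s \<Rightarrow> real^'n2) \<Rightarrow> 's \<Rightarrow> real^'d" where
  "ghat gbar gtil x y s = gbar s *v x + gtil s *v y s"

text \<open>Feasible set of (LinearP). p: scenario probabilities; (qZ, z): distribution of benchmark Z.\<close>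
definition feasP ::
  "('s::finite \<Rightarrow> real) \<Rightarrow> real \<Rightarrow> (real^'d) set \<Rightarrow> ('k::finite \<Rightarrow> real) \<Rightarrow> ('k \<Rightarrow> real^'d)
   \<Rightarrow> real^'n1^'m1 \<Rightarrow> real^'m1 \<Rightarrow> ('s \<Rightarrow> real^'n1^'m2) \<Rightarrow> ('s \<Rightarrow> real^'n2^'m2) \<Rightarrow> ('s \<Rightarrow> real^'m2)
   \<Rightarrow> ('s \<Rightarrow> real^'n1^'d) \<Rightarrow> ('s \<Rightarrow> real^'n2^'d) \<Rightarrow> ((real^'n1) \<times> ('s \<Rightarrow> real^'n2)) set" where
  "feasP p \<alpha> C qZ z A b T W h gbar gtil =
    {(x, y). (\<forall>i. (A *v x) $ i \<le> b $ i) \<and> (\<forall>j. 0 \<le> x $ j) \<and> (\<forall>s j. 0 \<le> y s $ j)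
       \<and> (\<forall>s i. h s $ i \<le> (T s *v x + W s *v y s) $ i)
       \<and> (\<forall>c\<in>C. cvar p \<alpha> (\<lambda>s. c \<bullet> ghat gbar gtil x y s) \<le> cvar qZ \<alpha> (\<lambda>k. c \<bullet> z k))}"

definition objP :: "('s::finite \<Rightarrow> real) \<Rightarrow> real^'n1 \<Rightarrow> ('s \<Rightarrow> real^'n2)
   \<Rightarrow> ((real^'n1) \<times> ('s \<Rightarrow> real^'n2)) \<Rightarrow> real" where
  "objP p f q xy = f \<bullet> fst xy + (\<Sum>s\<in>UNIV. p s * (q s \<bullet> snd xy s))"

definition feasD ::
  "('s::finite \<Rightarrow> real) \<Rightarrow> real \<Rightarrow> (real^'d) set
   \<Rightarrow> real^'n1^'m1 \<Rightarrow> real^'n1 \<Rightarrow> ('s \<Rightarrow> real^'n2) \<Rightarrow> ('s \<Rightarrow> real^'n1^'m2) \<Rightarrow> ('s \<Rightarrow> real^'n2^'m2)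
   \<Rightarrow> ('s \<Rightarrow> real^'n1^'d) \<Rightarrow> ('s \<Rightarrow> real^'n2^'d)
   \<Rightarrow> ((real^'m1) \<times> (real^'d \<Rightarrow> real) \<times> ('s \<Rightarrow> real^'d \<Rightarrow> real) \<times> ('s \<Rightarrow> real^'m2)) set" where
  "feasD p \<alpha> C A f q T W gbar gtil =
    {(lam, mu, nu, piv).
       (\<forall>i. 0 \<le> lam $ i) \<and> fin_meas C mu \<and> (\<forall>s. fin_meas C (nu s)) \<and> (\<forall>s i. 0 \<le> piv s $ i)
     \<and> (\<forall>B\<subseteq>C. (\<Sum>s\<in>UNIV. p s * msr (nu s) B) = msr mu B)
     \<and> (\<forall>s. \<forall>B\<subseteq>C. msr (nu s) B \<le> msr mu B / (1 - \<alpha>))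
     \<and> (\<forall>j. ((\<Sum>s\<in>UNIV. p s *\<^sub>R (piv s v* T s))
              - (\<Sum>s\<in>UNIV. p s *\<^sub>R fint (nu s) (\<lambda>c. c v* gbar s))) $ j
            \<le> (f + lam v* A) $ j)
     \<and> (\<forall>s j. (piv s v* W s - fint (nu s) (\<lambda>c. c v* gtil s)) $ j \<le> q s $ j)}"

definition objD :: "('s::finite \<Rightarrow> real) \<Rightarrow> real \<Rightarrow> ('k::finite \<Rightarrow> real) \<Rightarrow> ('k \<Rightarrow> real^'d)
   \<Rightarrow> real^'m1 \<Rightarrow> ('s \<Rightarrow> real^'m2)
   \<Rightarrow> ((real^'m1) \<times> (real^'d \<Rightarrow> real) \<times> ('s \<Rightarrow> real^'d \<Rightarrow> real) \<times> ('s \<Rightarrow> real^'m2)) \<Rightarrow> real" where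
  "objD p \<alpha> qZ z b h D = (case D of (lam, mu, nu, piv) \<Rightarrow>
     - fint mu (\<lambda>c. cvar qZ \<alpha> (\<lambda>k. c \<bullet> z k)) - lam \<bullet> b + (\<Sum>s\<in>UNIV. p s * (piv s \<bullet> h s)))"

end

theory Submission
  imports Defs
begin

lemma farkas_cone:
  fixes g :: "'i \<Rightarrow> 'a::euclidean_space" and t :: 'a
  assumes fin: "finite I" and H: "\<And>a. (\<forall>i\<in>I. 0 \<le> a \<bullet> g i) \<Longrightarrow> 0 \<le> a \<bullet> t"
  shows "\<exists>y. (\<forall>i\<in>I. 0 \<le> y i) \<and> t = (\<Sum>i\<in>I. y i *\<^sub>R g i)"
proof -
  define K where "K = {v. \<exists>y. (\<forall>i\<in>I. 0 \<le> y i) \<and> v = (\<Sum>i\<in>I. y i *\<^sub>R g i)}"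
  have cK: "convex_cone K"
    unfolding convex_cone_iff
  proof (intro conjI ballI allI impI)
    show "0 \<in> K" unfolding K_def by (rule CollectI, rule exI[of _ "\<lambda>_. 0"]) simp
  next
    fix u v assume "u \<in> K" "v \<in> K"
    then obtain y1 y2 where "\<forall>i\<in>I. 0 \<le> y1 i" "u = (\<Sum>i\<in>I. y1 i *\<^sub>R g i)"
       "\<forall>i\<in>I. 0 \<le> y2 i" "v = (\<Sum>i\<in>I. y2 i *\<^sub>R g i)" unfolding K_def by auto
    then show "u + v \<in> K" unfolding K_def
      by (intro CollectI exI[of _ "\<lambda>i. y1 i + y2 i"]) (auto simp: scaleR_add_left sum.distrib)
  next
    fix u and c :: real assume "u \<in> K" "0 \<le> c"
    then obtain y1 where "\<forall>i\<in>I. 0 \<le> y1 i" "u = (\<Sum>i\<in>I. y1 i *\<^sub>R g i)" unfolding K_def by auto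
    then show "c *\<^sub>R u \<in> K" unfolding K_def using \<open>0 \<le> c\<close>
      by (intro CollectI exI[of _ "\<lambda>i. c * y1 i"]) (auto simp: scaleR_sum_right)
  qed
  have gK: "g ` I \<subseteq> K"
  proof
    fix v assume "v \<in> g ` I"
    then obtain j where j: "j \<in> I" "v = g j" by auto
    have "(\<Sum>i\<in>I. (if i = j then 1 else 0) *\<^sub>R g i) = g j"
      using fin j by (subst sum.cong[OF refl, of _ _ "\<lambda>i. if i = j then g i else 0"]) auto
    then show "v \<in> K" unfolding K_def using j
      by (intro CollectI exI[of _ "\<lambda>i. if i = j then 1 else 0"]) auto
  qed
  have hK: "convex_cone hull (g ` I) \<subseteq> K"
    using cK gK by (simp add: hull_minimal)
  have "t \<in> convex_cone hull (g ` I)"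
  proof (rule ccontr)
    assume nt: "t \<notin> convex_cone hull (g ` I)"
    have cl: "closed (convex_cone hull (g ` I))"
      using fin by (simp add: closed_convex_cone_hull)
    obtain a b where ab: "a \<bullet> t < b" "\<forall>x\<in>convex_cone hull (g ` I). b < a \<bullet> x"
      using separating_hyperplane_closed_point[OF convex_convex_cone_hull cl nt] by blast
    have b0: "b < 0" using ab(2) convex_cone_hull_contains_0 by fastforce
    have "0 \<le> a \<bullet> g i" if i: "i \<in> I" for i
    proof (rule ccontr)
      assume "\<not> 0 \<le> a \<bullet> g i"
      then have neg: "a \<bullet> g i < 0" by simp
      define c where "c = b / (a \<bullet> g i)"
      have c0: "0 \<le> c" unfolding c_def using neg b0 by (simp add: divide_nonpos_neg)
      have "g i \<in> convex_cone hull (g ` I)" using i by (simp add: hull_inc)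
      then have "c *\<^sub>R g i \<in> convex_cone hull (g ` I)" using c0 by (rule convex_cone_hull_mul)
      then have "b < a \<bullet> (c *\<^sub>R g i)" using ab(2) by blast
      also have "a \<bullet> (c *\<^sub>R g i) = b" unfolding c_def using neg by simp
      finally show False by simp
    qed
    then have "0 \<le> a \<bullet> t" using H by blast
    then show False using ab(1) b0 by simp
  qed
  then show ?thesis using hK unfolding K_def by blast
qed

lemma farkas_affine:
  fixes a :: "'i \<Rightarrow> 'v::euclidean_space" and b :: "'i \<Rightarrow> real" and g :: 'v
  assumes fin: "finite I" and feas: "\<forall>i\<in>I. b i \<le> a i \<bullet> vz"
    and bnd: "\<And>v. \<forall>i\<in>I. b i \<le> a i \<bullet> v \<Longrightarrow> m \<le> g \<bullet> v"
  shows "\<exists>y. (\<forall>i\<in>I. 0 \<le> y i) \<and> (\<Sum>i\<in>I. y i *\<^sub>R a i) = g \<and> m \<le> (\<Sum>i\<in>I. y i * b i)"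
proof -
  define G where "G = (\<lambda>j. case j of Some i \<Rightarrow> (a i, b i) | None \<Rightarrow> ((0::'v), -1::real))"
  define J where "J = insert None (Some ` I)"
  have finJ: "finite J" using fin unfolding J_def by simp
  have "\<exists>y. (\<forall>j\<in>J. 0 \<le> y j) \<and> (g, m) = (\<Sum>j\<in>J. y j *\<^sub>R G j)"
  proof (rule farkas_cone[OF finJ])
    fix w :: "'v \<times> real" assume A: "\<forall>j\<in>J. 0 \<le> w \<bullet> G j"
    obtain u \<tau> where w: "w = (u, \<tau>)" by (cases w)
    have ai: "0 \<le> u \<bullet> a i + \<tau> * b i" if "i \<in> I" for i
      using A that unfolding J_def G_def w by (auto simp: inner_commute)
    have tau: "\<tau> \<le> 0" using A unfolding J_def G_def w by auto
    show "0 \<le> w \<bullet> (g, m)"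
    proof (cases "\<tau> < 0")
      case True
      define v where "v = (1 / (-\<tau>)) *\<^sub>R u"
      have "b i \<le> a i \<bullet> v" if "i \<in> I" for i
      proof -
        have "- \<tau> * b i \<le> u \<bullet> a i" using ai[OF that] by simp
        then have "b i \<le> (u \<bullet> a i) / (-\<tau>)" using True by (simp add: field_simps)
        then show ?thesis unfolding v_def by (simp add: inner_commute)
      qed
      then have "m \<le> g \<bullet> v" using bnd by blast
      then have "m \<le> (g \<bullet> u) / (-\<tau>)" unfolding v_def by simp
      then have "- \<tau> * m \<le> g \<bullet> u" using True by (simp add: field_simps)
      then show ?thesis unfolding w by (simp add: inner_commute algebra_simps)
    next
      case False
      then have t0: "\<tau> = 0" using tau by simp
      have gu: "0 \<le> g \<bullet> u"
      proof (rule ccontr)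
        assume "\<not> 0 \<le> g \<bullet> u"
        then have neg: "g \<bullet> u < 0" by simp
        define s where "s = (\<bar>m\<bar> + \<bar>g \<bullet> vz\<bar> + 1) / (- (g \<bullet> u))"
        have s0: "0 \<le> s" unfolding s_def using neg by (simp add: divide_nonneg_neg)
        have "b i \<le> a i \<bullet> (vz + s *\<^sub>R u)" if "i \<in> I" for i
        proof -
          have "0 \<le> a i \<bullet> u" using ai[OF that] t0 by (simp add: inner_commute)
          then have "0 \<le> s * (a i \<bullet> u)" using s0 by simp
          moreover have "b i \<le> a i \<bullet> vz" using feas that by blast
          ultimately show ?thesis by (simp add: inner_add_right)
        qed
        then have "m \<le> g \<bullet> (vz + s *\<^sub>R u)" using bnd by blast
        also have "g \<bullet> (vz + s *\<^sub>R u) = g \<bullet> vz - (\<bar>m\<bar> + \<bar>g \<bullet> vz\<bar> + 1)"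
          unfolding s_def using neg by (simp add: inner_diff_right)
        finally show False by linarith
      qed
      then show ?thesis unfolding w t0 by (simp add: inner_commute)
    qed
  qed
  then obtain y where y: "\<forall>j\<in>J. 0 \<le> y j" "(g, m) = (\<Sum>j\<in>J. y j *\<^sub>R G j)" by blast
  have sumJ: "(\<Sum>j\<in>J. y j *\<^sub>R G j) = y None *\<^sub>R (0, -1) + (\<Sum>i\<in>I. y (Some i) *\<^sub>R (a i, b i))"
    unfolding J_def G_def using fin by (simp add: sum.reindex)
  have e2: "(g, m) = y None *\<^sub>R (0, -1) + (\<Sum>i\<in>I. y (Some i) *\<^sub>R (a i, b i))"
    using y(2) unfolding sumJ .
  have "g = (\<Sum>i\<in>I. y (Some i) *\<^sub>R a i)" "m = - y None + (\<Sum>i\<in>I. y (Some i) * b i)"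
    using arg_cong[OF e2, of fst] arg_cong[OF e2, of snd] by (simp_all add: fst_sum snd_sum)
  moreover have "0 \<le> y None" using y(1) unfolding J_def by auto
  ultimately show ?thesis using y(1) unfolding J_def
    by (intro exI[of _ "\<lambda>i. y (Some i)"]) auto
qed

lemma farkas_infeas:
  fixes a :: "'i \<Rightarrow> 'v::euclidean_space" and b :: "'i \<Rightarrow> real"
  assumes fin: "finite I" and inf: "\<not> (\<exists>v. \<forall>i\<in>I. b i \<le> a i \<bullet> v)"
  shows "\<exists>y. (\<forall>i\<in>I. 0 \<le> y i) \<and> (\<Sum>i\<in>I. y i *\<^sub>R a i) = 0 \<and> 0 < (\<Sum>i\<in>I. y i * b i)"
proof -
  define G where "G = (\<lambda>j. case j of Some i \<Rightarrow> (a i, b i) | None \<Rightarrow> ((0::'v), -1::real))"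
  define J where "J = insert None (Some ` I)"
  have finJ: "finite J" using fin unfolding J_def by simp
  have "\<exists>y. (\<forall>j\<in>J. 0 \<le> y j) \<and> ((0::'v), 1::real) = (\<Sum>j\<in>J. y j *\<^sub>R G j)"
  proof (rule farkas_cone[OF finJ])
    fix w :: "'v \<times> real" assume A: "\<forall>j\<in>J. 0 \<le> w \<bullet> G j"
    obtain u \<tau> where w: "w = (u, \<tau>)" by (cases w)
    have ai: "0 \<le> u \<bullet> a i + \<tau> * b i" if "i \<in> I" for i
      using A that unfolding J_def G_def w by (auto simp: inner_commute)
    have tau: "\<tau> \<le> 0" using A unfolding J_def G_def w by auto
    have "\<not> \<tau> < 0"
    proof
      assume True: "\<tau> < 0"
      define v where "v = (1 / (-\<tau>)) *\<^sub>R u"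
      have "b i \<le> a i \<bullet> v" if "i \<in> I" for i
      proof -
        have "- \<tau> * b i \<le> u \<bullet> a i" using ai[OF that] by simp
        then have "b i \<le> (u \<bullet> a i) / (-\<tau>)" using True by (simp add: field_simps)
        then show ?thesis unfolding v_def by (simp add: inner_commute)
      qed
      then show False using inf by blast
    qed
    then show "0 \<le> w \<bullet> (0, 1)" unfolding w using tau by simp
  qed
  then obtain y where y: "\<forall>j\<in>J. 0 \<le> y j" "((0::'v), 1::real) = (\<Sum>j\<in>J. y j *\<^sub>R G j)" by blast
  have sumJ: "(\<Sum>j\<in>J. y j *\<^sub>R G j) = y None *\<^sub>R (0, -1) + (\<Sum>i\<in>I. y (Some i) *\<^sub>R (a i, b i))"
    unfolding J_def G_def using fin by (simp add: sum.reindex)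
  have e2: "((0::'v), 1::real) = y None *\<^sub>R (0, -1) + (\<Sum>i\<in>I. y (Some i) *\<^sub>R (a i, b i))"
    using y(2) unfolding sumJ .
  have "0 = (\<Sum>i\<in>I. y (Some i) *\<^sub>R a i)" "1 = - y None + (\<Sum>i\<in>I. y (Some i) * b i)"
    using arg_cong[OF e2, of fst] arg_cong[OF e2, of snd] by (simp_all add: fst_sum snd_sum)
  moreover have "0 \<le> y None" using y(1) unfolding J_def by auto
  ultimately show ?thesis using y(1) unfolding J_def
    by (intro exI[of _ "\<lambda>i. y (Some i)"]) auto
qed

definition phi :: "('a::finite \<Rightarrow> real) \<Rightarrow> real \<Rightarrow> ('a \<Rightarrow> real) \<Rightarrow> real \<Rightarrow> real" where
  "phi P \<alpha> V \<eta> = \<eta> + (1 / (1 - \<alpha>)) * (\<Sum>s\<in>UNIV. P s * max (V s - \<eta>) 0)"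

lemma cvar_phi: "cvar P \<alpha> V = Inf (range (phi P \<alpha> V))"
  by (simp add: cvar_def phi_def)

definition Wset :: "('a::finite \<Rightarrow> real) \<Rightarrow> real \<Rightarrow> (real^'a) set" where
  "Wset P \<alpha> = {w. (\<forall>s. 0 \<le> w$s \<and> w$s \<le> P s / (1 - \<alpha>)) \<and> (\<Sum>s\<in>UNIV. w$s) = 1}"

lemma phi_ge:
  assumes P: "\<And>s. 0 \<le> P s" and al: "\<alpha> < 1" and w: "w \<in> Wset P \<alpha>"
  shows "(\<Sum>s\<in>UNIV. w$s * V s) \<le> phi P \<alpha> V \<eta>"
proof -
  have w1: "\<And>s. 0 \<le> w$s" "\<And>s. w$s \<le> P s / (1 - \<alpha>)" "(\<Sum>s\<in>UNIV. w$s) = 1"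
    using w unfolding Wset_def by auto
  have "(\<Sum>s\<in>UNIV. w$s * V s) = (\<Sum>s\<in>UNIV. w$s * \<eta>) + (\<Sum>s\<in>UNIV. w$s * (V s - \<eta>))"
    by (simp add: sum.distrib[symmetric] algebra_simps)
  also have "(\<Sum>s\<in>UNIV. w$s * \<eta>) = \<eta>" using w1(3) by (simp add: sum_distrib_right[symmetric])
  also have "(\<Sum>s\<in>UNIV. w$s * (V s - \<eta>)) \<le> (\<Sum>s\<in>UNIV. (P s / (1 - \<alpha>)) * max (V s - \<eta>) 0)"
  proof (rule sum_mono)
    fix s :: 'a
    have "w$s * (V s - \<eta>) \<le> w$s * max (V s - \<eta>) 0" using w1(1)[of s] by (simp add: mult_left_mono)
    also have "\<dots> \<le> (P s / (1 - \<alpha>)) * max (V s - \<eta>) 0" using w1(2)[of s] by (intro mult_right_mono) auto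
    finally show "w$s * (V s - \<eta>) \<le> (P s / (1 - \<alpha>)) * max (V s - \<eta>) 0" .
  qed
  also have "(\<Sum>s\<in>UNIV. (P s / (1 - \<alpha>)) * max (V s - \<eta>) 0) = (1 / (1 - \<alpha>)) * (\<Sum>s\<in>UNIV. P s * max (V s - \<eta>) 0)"
    by (simp add: sum_distrib_left)
  finally show ?thesis unfolding phi_def by simp
qed

lemma P_in_W:
  assumes P: "\<And>s. 0 \<le> P s" and Ps: "(\<Sum>s\<in>UNIV. P s) = 1" and al: "0 \<le> \<alpha>" "\<alpha> < 1"
  shows "(\<chi> s. P s) \<in> Wset P \<alpha>"
proof -
  have "P s \<le> P s / (1 - \<alpha>)" for s
  proof -
    have "P s * (1 - \<alpha>) \<le> P s" using P[of s] al by (simp add: mult_left_le)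
    then show ?thesis using al by (simp add: le_divide_eq)
  qed
  then show ?thesis unfolding Wset_def using P Ps by auto
qed

lemma cvar_ge:
  assumes P: "\<And>s. 0 \<le> P s" and al: "\<alpha> < 1" and w: "w \<in> Wset P \<alpha>"
  shows "(\<Sum>s\<in>UNIV. w$s * V s) \<le> cvar P \<alpha> V"
  unfolding cvar_phi by (rule cInf_greatest) (use phi_ge[OF P al w] in auto)

lemma phi_bdd:
  assumes P: "\<And>s. 0 \<le> P s" and Ps: "(\<Sum>s\<in>UNIV. P s) = 1" and al: "0 \<le> \<alpha>" "\<alpha> < 1"
  shows "bdd_below (range (phi P \<alpha> V))"
  unfolding bdd_below_def using phi_ge[OF P al(2) P_in_W[OF P Ps al], of V] by blast

lemma cvar_le_phi:
  assumes P: "\<And>s. 0 \<le> P s" and Ps: "(\<Sum>s\<in>UNIV. P s) = 1" and al: "0 \<le> \<alpha>" "\<alpha> < 1"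
  shows "cvar P \<alpha> V \<le> phi P \<alpha> V \<eta>"
  unfolding cvar_phi by (rule cInf_lower[OF _ phi_bdd[OF P Ps al]]) simp

lemma cvar_attained:
  fixes P :: "'a::finite \<Rightarrow> real"
  assumes P: "\<And>s. 0 \<le> P s" and Ps: "(\<Sum>s\<in>UNIV. P s) = 1" and al: "0 \<le> \<alpha>" "\<alpha> < 1"
  shows "\<exists>w\<in>Wset P \<alpha>. cvar P \<alpha> V \<le> (\<Sum>s\<in>UNIV. w$s * V s)"
proof -
  define a :: "'a + 'a \<Rightarrow> real \<times> (real^'a)" where
    "a = (\<lambda>i. case i of Inl s \<Rightarrow> (1, axis s 1) | Inr s \<Rightarrow> (0, axis s 1))"
  define b :: "'a + 'a \<Rightarrow> real" where "b = (\<lambda>i. case i of Inl s \<Rightarrow> V s | Inr s \<Rightarrow> 0)"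
  define g :: "real \<times> (real^'a)" where "g = (1, \<chi> s. P s / (1 - \<alpha>))"
  have "\<exists>y. (\<forall>i\<in>UNIV. 0 \<le> y i) \<and> (\<Sum>i\<in>UNIV. y i *\<^sub>R a i) = g \<and> cvar P \<alpha> V \<le> (\<Sum>i\<in>UNIV. y i * b i)"
  proof (rule farkas_affine[where vz = "(0, \<chi> s. max (V s) 0)"])
    show "\<forall>i\<in>UNIV. b i \<le> a i \<bullet> (0, \<chi> s. max (V s) 0)"
      by (auto simp: a_def b_def inner_axis' split: sum.split)
  next
    fix v :: "real \<times> (real^'a)" assume H: "\<forall>i\<in>UNIV. b i \<le> a i \<bullet> v"
    obtain \<eta> u where v: "v = (\<eta>, u)" by (cases v)
    have h1: "V s \<le> \<eta> + u$s" for s using H[rule_format, of "Inl s"] by (simp add: a_def b_def v inner_axis')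
    have h2: "0 \<le> u$s" for s using H[rule_format, of "Inr s"] by (simp add: a_def b_def v inner_axis')
    have "cvar P \<alpha> V \<le> phi P \<alpha> V \<eta>" by (rule cvar_le_phi[OF P Ps al])
    also have "phi P \<alpha> V \<eta> \<le> \<eta> + (1 / (1 - \<alpha>)) * (\<Sum>s\<in>UNIV. P s * u$s)"
      unfolding phi_def using al
      by (intro add_left_mono mult_left_mono sum_mono) (auto intro!: mult_left_mono simp: P h1 h2 algebra_simps)
    also have "\<dots> = g \<bullet> v"
      by (simp add: g_def v inner_vec_def sum_distrib_left)
    finally show "cvar P \<alpha> V \<le> g \<bullet> v" .
  qed simp
  then obtain y where y: "\<forall>i. 0 \<le> y i" "(\<Sum>i\<in>UNIV. y i *\<^sub>R a i) = g"
     "cvar P \<alpha> V \<le> (\<Sum>i\<in>UNIV. y i * b i)" by auto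
  have split: "\<And>F :: 'a + 'a \<Rightarrow> 'b::comm_monoid_add. (\<Sum>i\<in>UNIV. F i) = (\<Sum>s\<in>UNIV. F (Inl s)) + (\<Sum>s\<in>UNIV. F (Inr s))"
    by (subst UNIV_Plus_UNIV[symmetric], subst sum.Plus) auto
  have e1: "(\<Sum>s\<in>UNIV. y (Inl s)) = 1"
    using arg_cong[OF y(2), of fst] by (simp add: split fst_sum a_def g_def)
  have e2: "y (Inl s) + y (Inr s) = P s / (1 - \<alpha>)" for s
  proof -
    have "(snd (\<Sum>i\<in>UNIV. y i *\<^sub>R a i)) $ s = P s / (1 - \<alpha>)"
      using y(2) by (simp add: g_def)
    moreover have "(snd (\<Sum>i\<in>UNIV. y i *\<^sub>R a i)) $ s = y (Inl s) + y (Inr s)"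
      by (simp add: split snd_sum a_def axis_def if_distrib cong: if_cong)
    ultimately show ?thesis by simp
  qed
  have "y (Inl s) \<le> P s / (1 - \<alpha>)" for s using e2[of s] y(1)[rule_format, of "Inr s"] by linarith
  then have "(\<chi> s. y (Inl s)) \<in> Wset P \<alpha>" unfolding Wset_def using e1 y(1) by auto
  moreover have "(\<Sum>i\<in>UNIV. y i * b i) = (\<Sum>s\<in>UNIV. (\<chi> s. y (Inl s))$s * V s)"
    by (simp add: split b_def)
  ultimately show ?thesis using y(3) by metis
qed

lemma W_polytope:
  fixes P :: "'a::finite \<Rightarrow> real"
  shows "polytope (Wset P \<alpha>)"
proof -
  have eq: "Wset P \<alpha> = (\<Inter>s. {w. (- axis s 1) \<bullet> w \<le> 0}) \<inter> (\<Inter>s. {w. axis s 1 \<bullet> w \<le> P s / (1 - \<alpha>)})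
        \<inter> {w. (\<chi> s. 1) \<bullet> w = 1}"
  proof -
    have "(\<chi> s. 1) \<bullet> w = (\<Sum>s\<in>UNIV. w$s)" for w :: "real^'a" by (simp add: inner_vec_def)
    then show ?thesis unfolding Wset_def by (auto simp: inner_axis')
  qed
  have "polyhedron (Wset P \<alpha>)" unfolding eq
    by (intro polyhedron_Int polyhedron_Inter) (auto simp: polyhedron_halfspace_le polyhedron_halfspace_ge polyhedron_hyperplane)
  moreover have "bounded (Wset P \<alpha>)"
    by (rule bounded_subset[OF bounded_cbox[of 0 "\<chi> s. P s / (1 - \<alpha>)"]])
       (auto simp: Wset_def mem_box_cart)
  ultimately show ?thesis by (simp add: polytope_eq_bounded_polyhedron)
qed

lemma hull_lin_max:
  fixes c :: "'a::real_inner"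
  assumes "w \<in> convex hull E"
  shows "\<exists>e\<in>E. c \<bullet> w \<le> c \<bullet> e"
proof (rule ccontr)
  assume "\<not> (\<exists>e\<in>E. c \<bullet> w \<le> c \<bullet> e)"
  then have "E \<subseteq> {u. c \<bullet> u < c \<bullet> w}" by auto
  then have "convex hull E \<subseteq> {u. c \<bullet> u < c \<bullet> w}"
    by (intro hull_minimal) (auto simp: convex_halfspace_lt)
  then show False using assms by auto
qed

lemma cvar_max:
  fixes P :: "'a::finite \<Rightarrow> real"
  assumes P: "\<And>s. 0 \<le> P s" and Ps: "(\<Sum>s\<in>UNIV. P s) = 1" and al: "0 \<le> \<alpha>" "\<alpha> < 1"
    and E: "convex hull E = Wset P \<alpha>"
  shows "\<forall>e\<in>E. (\<Sum>s\<in>UNIV. e$s * V s) \<le> cvar P \<alpha> V"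
    and "\<exists>e\<in>E. cvar P \<alpha> V \<le> (\<Sum>s\<in>UNIV. e$s * V s)"
proof -
  show "\<forall>e\<in>E. (\<Sum>s\<in>UNIV. e$s * V s) \<le> cvar P \<alpha> V"
    using cvar_ge[of P \<alpha>, OF P al(2)] hull_subset[of E convex] E by blast
  obtain w where w: "w \<in> Wset P \<alpha>" "cvar P \<alpha> V \<le> (\<Sum>s\<in>UNIV. w$s * V s)"
    using cvar_attained[OF P Ps al] by blast
  obtain e where e: "e \<in> E" "(\<chi> s. V s) \<bullet> w \<le> (\<chi> s. V s) \<bullet> e"
    using hull_lin_max[of w E] w(1) E by blast
  then show "\<exists>e\<in>E. cvar P \<alpha> V \<le> (\<Sum>s\<in>UNIV. e$s * V s)"
    using w(2) by (intro bexI[OF _ e(1)]) (auto simp: inner_vec_def mult.commute)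
qed

lemma var_real:
  fixes P :: "'a::finite \<Rightarrow> real"
  assumes P: "\<And>s. 0 \<le> P s" and Ps: "(\<Sum>s\<in>UNIV. P s) = 1" and al: "0 < \<alpha>" and al1: "\<alpha> < 1"
  shows "\<exists>t0. var P \<alpha> V = ereal t0 \<and> \<alpha> \<le> (\<Sum>s\<in>{s. V s \<le> t0}. P s) \<and> (\<Sum>s\<in>{s. V s < t0}. P s) \<le> \<alpha>"
proof -
  define S where "S = {t. \<alpha> \<le> (\<Sum>s\<in>{s. V s \<le> t}. P s)}"
  define M where "M = Max (range V)"
  have "{s. V s \<le> M} = UNIV" unfolding M_def by auto
  then have "M \<in> S" unfolding S_def using Ps al1 by simp
  moreover have "M \<in> range V" unfolding M_def by (rule Max_in) auto
  ultimately have RS: "range V \<inter> S \<noteq> {}" by blast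
  define t0 where "t0 = Min (range V \<inter> S)"
  have t0S: "t0 \<in> S" "t0 \<in> range V" using Min_in[of "range V \<inter> S"] RS unfolding t0_def by auto
  have low: "t0 \<le> t" if "t \<in> S" for t
  proof (rule ccontr)
    assume "\<not> t0 \<le> t" then have tt: "t < t0" by simp
    define A where "A = {s. V s \<le> t}"
    show False
    proof (cases "A = {}")
      case True
      then have "(\<Sum>s\<in>{s. V s \<le> t}. P s) = 0" unfolding A_def by simp
      then show False using that al unfolding S_def by simp
    next
      case False
      define t2 where "t2 = Max (V ` A)"
      have t2A: "t2 \<in> V ` A" unfolding t2_def using False by (intro Max_in) auto
      have "t2 \<le> t" using t2A unfolding A_def by auto
      have "{s. V s \<le> t2} = A"
        using \<open>t2 \<le> t\<close> unfolding A_def t2_def by (auto simp: A_def)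
      then have "t2 \<in> S" using that unfolding S_def A_def by simp
      then have "t0 \<le> t2" unfolding t0_def using t2A by (intro Min_le) auto
      then show False using \<open>t2 \<le> t\<close> tt by simp
    qed
  qed
  have "var P \<alpha> V = ereal t0"
    unfolding var_def
  proof (rule Inf_eqI)
    fix i assume "i \<in> {ereal t |t. \<alpha> \<le> (\<Sum>s\<in>{s. V s \<le> t}. P s)}"
    then show "ereal t0 \<le> i" using low unfolding S_def by auto
  next
    fix y assume "\<And>i. i \<in> {ereal t |t. \<alpha> \<le> (\<Sum>s\<in>{s. V s \<le> t}. P s)} \<Longrightarrow> y \<le> i"
    then show "y \<le> ereal t0" using t0S(1) unfolding S_def by auto
  qed
  moreover have "(\<Sum>s\<in>{s. V s < t0}. P s) \<le> \<alpha>"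
  proof (cases "{s. V s < t0} = {}")
    case True then show ?thesis using al by simp
  next
    case False
    define t1 where "t1 = Max (V ` {s. V s < t0})"
    have t1A: "t1 \<in> V ` {s. V s < t0}" unfolding t1_def using False by (intro Max_in) auto
    have "{s. V s \<le> t1} = {s. V s < t0}"
    proof
      show "{s. V s \<le> t1} \<subseteq> {s. V s < t0}" using t1A by auto
      show "{s. V s < t0} \<subseteq> {s. V s \<le> t1}" unfolding t1_def by (auto intro: Max_ge)
    qed
    moreover have "t1 \<notin> S" using low t1A by force
    ultimately show ?thesis unfolding S_def by simp
  qed
  ultimately show ?thesis using t0S(1) unfolding S_def by blast
qed

lemma var_zero:
  fixes P :: "'a::finite \<Rightarrow> real"
  assumes P: "\<And>s. 0 \<le> P s"
  shows "var P 0 V = -\<infinity>"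
proof -
  have "var P 0 V \<le> ereal B" for B
    unfolding var_def by (rule Inf_lower) (auto intro!: sum_nonneg P)
  then show ?thesis by (rule ereal_bot)
qed

lemma sum_if_mult:
  fixes P :: "'a::finite \<Rightarrow> real"
  shows "(\<Sum>s\<in>(UNIV::'a::finite set). P s * (if Q s then d else 0)) = d * sum P {s. Q s}"
proof -
  have "(\<Sum>s\<in>(UNIV::'a set). P s * (if Q s then d else 0)) = (\<Sum>s\<in>UNIV. if Q s then P s * d else 0)"
    by (rule sum.cong) auto
  also have "\<dots> = (\<Sum>s\<in>{s. Q s}. P s * d)"
    using sum.inter_filter[of "UNIV::'a set" "\<lambda>s. P s * d" Q] by simp
  also have "\<dots> = d * sum P {s. Q s}" by (simp add: sum_distrib_left mult.commute)
  finally show ?thesis .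
qed

lemma phi_min:
  fixes P :: "'a::finite \<Rightarrow> real"
  assumes P: "\<And>s. 0 \<le> P s" and Ps: "(\<Sum>s\<in>UNIV. P s) = 1" and al: "0 < \<alpha>" "\<alpha> < 1"
    and t1: "\<alpha> \<le> (\<Sum>s\<in>{s. V s \<le> t0}. P s)" and t2: "(\<Sum>s\<in>{s. V s < t0}. P s) \<le> \<alpha>"
  shows "phi P \<alpha> V t0 \<le> phi P \<alpha> V \<eta>"
proof -
  define K where "K = 1 / (1 - \<alpha>)"
  have K0: "0 < K" unfolding K_def using al by simp
  define X where "X = (\<lambda>e. \<Sum>s\<in>UNIV. P s * max (V s - e) 0)"
  have ph: "phi P \<alpha> V e = e + K * X e" for e unfolding phi_def K_def X_def by simp
  have split: "(\<Sum>s\<in>{s. Q s}. P s) + (\<Sum>s\<in>{s. \<not> Q s}. P s) = 1" for Q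
  proof -
    have "sum P {s. Q s} + sum P {s. \<not> Q s} = sum P ({s. Q s} \<union> {s. \<not> Q s})"
      by (rule sum.union_disjoint[symmetric]) auto
    also have "{s. Q s} \<union> {s. \<not> Q s} = UNIV" by auto
    finally show ?thesis using Ps by simp
  qed
  show ?thesis
  proof (cases "t0 \<le> \<eta>")
    case True
    define Q where "Q = (\<Sum>s\<in>{s. t0 < V s}. P s)"
    have Qle: "Q \<le> 1 - \<alpha>" using split[of "\<lambda>s. V s \<le> t0"] t1 unfolding Q_def by (simp add: not_le)
    have "(\<Sum>s\<in>UNIV. P s * max (V s - t0) 0 - P s * (if t0 < V s then \<eta> - t0 else 0)) \<le> X \<eta>"
      unfolding X_def
    proof (rule sum_mono)
      fix s
      have "max (V s - t0) 0 - (if t0 < V s then \<eta> - t0 else 0) \<le> max (V s - \<eta>) 0" using True by auto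
      then have "P s * (max (V s - t0) 0 - (if t0 < V s then \<eta> - t0 else 0)) \<le> P s * max (V s - \<eta>) 0"
        using P[of s] by (rule mult_left_mono)
      then show "P s * max (V s - t0) 0 - P s * (if t0 < V s then \<eta> - t0 else 0) \<le> P s * max (V s - \<eta>) 0"
        by (simp add: right_diff_distrib)
    qed
    moreover have "(\<Sum>s\<in>UNIV. P s * max (V s - t0) 0 - P s * (if t0 < V s then \<eta> - t0 else 0)) = X t0 - (\<eta> - t0) * Q"
      unfolding X_def Q_def by (simp only: sum_subtractf sum_if_mult)
    ultimately have "X t0 - (\<eta> - t0) * Q \<le> X \<eta>" by simp
    then have "K * X t0 - K * ((\<eta> - t0) * Q) \<le> K * X \<eta>" using K0 by (simp add: right_diff_distrib[symmetric])
    moreover have "K * ((\<eta> - t0) * Q) \<le> \<eta> - t0"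
    proof -
      have "K * Q \<le> 1" unfolding K_def using Qle al by (simp add: divide_le_eq)
      then have "(\<eta> - t0) * (K * Q) \<le> (\<eta> - t0) * 1" using True by (intro mult_left_mono) auto
      then show ?thesis by (simp add: algebra_simps)
    qed
    ultimately show ?thesis unfolding ph by linarith
  next
    case False
    define Q where "Q = (\<Sum>s\<in>{s. t0 \<le> V s}. P s)"
    have Qge: "1 - \<alpha> \<le> Q" using split[of "\<lambda>s. V s < t0"] t2 unfolding Q_def by (simp add: not_less)
    have "(\<Sum>s\<in>UNIV. P s * max (V s - t0) 0 + P s * (if t0 \<le> V s then t0 - \<eta> else 0)) \<le> X \<eta>"
      unfolding X_def
    proof (rule sum_mono)
      fix s
      have "max (V s - t0) 0 + (if t0 \<le> V s then t0 - \<eta> else 0) \<le> max (V s - \<eta>) 0" using False by auto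
      then have "P s * (max (V s - t0) 0 + (if t0 \<le> V s then t0 - \<eta> else 0)) \<le> P s * max (V s - \<eta>) 0"
        using P[of s] by (rule mult_left_mono)
      then show "P s * max (V s - t0) 0 + P s * (if t0 \<le> V s then t0 - \<eta> else 0) \<le> P s * max (V s - \<eta>) 0"
        by (simp add: distrib_left)
    qed
    moreover have "(\<Sum>s\<in>UNIV. P s * max (V s - t0) 0 + P s * (if t0 \<le> V s then t0 - \<eta> else 0)) = X t0 + (t0 - \<eta>) * Q"
      unfolding X_def Q_def by (simp only: sum.distrib sum_if_mult)
    ultimately have "X t0 + (t0 - \<eta>) * Q \<le> X \<eta>" by simp
    then have "K * X t0 + K * ((t0 - \<eta>) * Q) \<le> K * X \<eta>" using K0 by (simp add: distrib_left[symmetric])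
    moreover have "t0 - \<eta> \<le> K * ((t0 - \<eta>) * Q)"
    proof -
      have "1 \<le> K * Q" unfolding K_def using Qge al by (simp add: le_divide_eq)
      then have "(t0 - \<eta>) * 1 \<le> (t0 - \<eta>) * (K * Q)" using False by (intro mult_left_mono) auto
      then show ?thesis by (simp add: algebra_simps)
    qed
    ultimately show ?thesis unfolding ph by linarith
  qed
qed

lemma cs_char:
  fixes P :: "'a::finite \<Rightarrow> real"
  assumes P: "\<And>s. 0 < P s" and Ps: "(\<Sum>s\<in>UNIV. P s) = 1" and al: "0 \<le> \<alpha>" "\<alpha> < 1"
    and w: "w \<in> Wset P \<alpha>"
  shows "(\<Sum>s\<in>UNIV. w$s * V s) = cvar P \<alpha> V \<longleftrightarrow>
     (\<forall>s. 0 < w$s \<longrightarrow> var P \<alpha> V \<le> ereal (V s)) \<and>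
     (\<forall>s. 0 < P s / (1 - \<alpha>) - w$s \<longrightarrow> ereal (V s) \<le> var P \<alpha> V)"
proof -
  have P0: "\<And>s. 0 \<le> P s" using P less_imp_le by blast
  have w1: "\<And>s. 0 \<le> w$s" "\<And>s. w$s \<le> P s / (1 - \<alpha>)" "(\<Sum>s\<in>UNIV. w$s) = 1"
    using w unfolding Wset_def by auto
  show ?thesis
  proof (cases "\<alpha> = 0")
    case True
    have wP: "w$s = P s" for s
    proof -
      have "(\<Sum>s\<in>UNIV. P s - w$s) = 0" using Ps w1(3) by (simp add: sum_subtractf)
      moreover have "\<forall>s\<in>UNIV. 0 \<le> P s - w$s" using w1(2) True by simp
      ultimately show ?thesis using sum_nonneg_eq_0_iff[of UNIV "\<lambda>s. P s - w$s"] by simp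
    qed
    obtain w' where w': "w' \<in> Wset P \<alpha>" "cvar P \<alpha> V \<le> (\<Sum>s\<in>UNIV. w'$s * V s)"
      using cvar_attained[OF P0 Ps al] by blast
    have "w'$s = P s" for s
    proof -
      have "(\<Sum>s\<in>UNIV. P s - w'$s) = 0" using Ps w' unfolding Wset_def by (simp add: sum_subtractf)
      moreover have "\<forall>s\<in>UNIV. 0 \<le> P s - w'$s" using w' True unfolding Wset_def by simp
      ultimately show ?thesis using sum_nonneg_eq_0_iff[of UNIV "\<lambda>s. P s - w'$s"] by simp
    qed
    then have "(\<Sum>s\<in>UNIV. w$s * V s) = cvar P \<alpha> V"
      using w' cvar_ge[of P \<alpha>, OF P0 al(2) w] wP by (simp add: order_antisym)
    then show ?thesis using True var_zero[of P V, OF P0] wP by simp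
  next
    case False
    then have al0: "0 < \<alpha>" using al by simp
    obtain t0 where t0: "var P \<alpha> V = ereal t0" "\<alpha> \<le> (\<Sum>s\<in>{s. V s \<le> t0}. P s)"
        "(\<Sum>s\<in>{s. V s < t0}. P s) \<le> \<alpha>"
      using var_real[OF P0 Ps al0 al(2)] by blast
    have cv: "cvar P \<alpha> V = phi P \<alpha> V t0"
      unfolding cvar_phi by (rule cInf_eq_minimum) (use phi_min[OF P0 Ps al0 al(2) t0(2,3)] in auto)
    define d where "d = (\<lambda>s. (P s / (1 - \<alpha>)) * max (V s - t0) 0 - w$s * (V s - t0))"
    have d0: "0 \<le> d s" for s
    proof (cases "t0 < V s")
      case True
      then have "d s = (P s / (1 - \<alpha>) - w$s) * (V s - t0)" unfolding d_def by (simp add: algebra_simps)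
      then show ?thesis using w1(2)[of s] True by simp
    next
      case False
      then have "d s = w$s * (t0 - V s)" unfolding d_def by (simp add: algebra_simps)
      then show ?thesis using w1(1)[of s] False by simp
    qed
    have dsum: "cvar P \<alpha> V - (\<Sum>s\<in>UNIV. w$s * V s) = (\<Sum>s\<in>UNIV. d s)"
    proof -
      have tw: "(\<Sum>s\<in>UNIV. t0 * w$s) = t0" using w1(3) by (simp add: sum_distrib_left[symmetric])
      have "(\<Sum>s\<in>UNIV. w$s * V s) = t0 + (\<Sum>s\<in>UNIV. w$s * (V s - t0))"
        using tw by (simp add: algebra_simps sum_subtractf)
      moreover have "cvar P \<alpha> V = t0 + (\<Sum>s\<in>UNIV. (P s / (1 - \<alpha>)) * max (V s - t0) 0)"
        unfolding cv phi_def by (simp add: sum_distrib_left)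
      ultimately show ?thesis unfolding d_def by (simp add: sum_subtractf)
    qed
    have "(\<Sum>s\<in>UNIV. w$s * V s) = cvar P \<alpha> V \<longleftrightarrow> (\<forall>s. d s = 0)"
      using dsum sum_nonneg_eq_0_iff[of UNIV d] d0 by auto
    also have "\<dots> \<longleftrightarrow> (\<forall>s. 0 < w$s \<longrightarrow> t0 \<le> V s) \<and> (\<forall>s. 0 < P s / (1 - \<alpha>) - w$s \<longrightarrow> V s \<le> t0)"
    proof -
      have "d s = 0 \<longleftrightarrow> (0 < w$s \<longrightarrow> t0 \<le> V s) \<and> (0 < P s / (1 - \<alpha>) - w$s \<longrightarrow> V s \<le> t0)" for s
      proof (cases "t0 < V s")
        case True
        then have "d s = (P s / (1 - \<alpha>) - w$s) * (V s - t0)" unfolding d_def by (simp add: algebra_simps)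
        then show ?thesis using w1(2)[of s] True by auto
      next
        case False
        then have "d s = w$s * (t0 - V s)" unfolding d_def by (simp add: algebra_simps)
        then show ?thesis using w1(1)[of s] False by auto
      qed
      then show ?thesis by blast
    qed
    finally show ?thesis unfolding t0(1) by simp
  qed
qed

lemma fint_superset:
  assumes "finite F" "fsupp \<mu> \<subseteq> F"
  shows "fint \<mu> u = (\<Sum>c\<in>F. \<mu> c *\<^sub>R u c)"
  unfolding fint_def by (rule sum.mono_neutral_left) (use assms in \<open>auto simp: fsupp_def\<close>)

lemma msr_superset:
  assumes "finite F" "fsupp \<mu> \<subseteq> F"
  shows "msr \<mu> B = (\<Sum>c\<in>B \<inter> F. \<mu> c)"
  unfolding msr_def by (rule sum.mono_neutral_left) (use assms in \<open>auto simp: fsupp_def\<close>)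

lemma msr_single: "msr \<mu> {c} = \<mu> c"
  unfolding msr_def fsupp_def by (cases "\<mu> c = 0") auto

locale LPsetup =
  fixes p :: "'s::finite \<Rightarrow> real" and \<alpha> :: real
    and qZ :: "'k::finite \<Rightarrow> real" and z :: "'k \<Rightarrow> real^'d::finite"
    and C :: "(real^'d) set"
    and A :: "real^'n1::finite^'m1::finite" and b :: "real^'m1" and f :: "real^'n1"
    and q :: "'s \<Rightarrow> real^'n2::finite" and T :: "'s \<Rightarrow> real^'n1^'m2::finite"
    and W :: "'s \<Rightarrow> real^'n2^'m2" and h :: "'s \<Rightarrow> real^'m2"
    and gbar :: "'s \<Rightarrow> real^'n1^'d" and gtil :: "'s \<Rightarrow> real^'n2^'d"
  assumes p_pos: "\<And>s. 0 < p s" and p_sum: "(\<Sum>s\<in>UNIV. p s) = 1"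
    and qZ_nonneg: "\<And>k. 0 \<le> qZ k" and qZ_sum: "(\<Sum>k\<in>UNIV. qZ k) = 1"
    and alpha: "0 \<le> \<alpha>" "\<alpha> < 1"
    and C_poly: "polyhedron C" and C_ne: "C \<noteq> {}" and C_simplex: "C \<subseteq> unit_simplex"
begin

abbreviation "FP \<equiv> feasP p \<alpha> C qZ z A b T W h gbar gtil"
abbreviation "FD \<equiv> feasD p \<alpha> C A f q T W gbar gtil"
abbreviation "oP \<equiv> objP p f q"
abbreviation "oD \<equiv> objD p \<alpha> qZ z b h"
abbreviation "G x y s \<equiv> ghat gbar gtil x y s"
abbreviation "Lc x y c \<equiv> cvar p \<alpha> (\<lambda>s. c \<bullet> G x y s)"
abbreviation "rZ c \<equiv> cvar qZ \<alpha> (\<lambda>k. c \<bullet> z k)"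

lemma p_nonneg: "0 \<le> p s" using p_pos[of s] by simp

lemma FD_facts:
  assumes "(lam, mu, nu, piv) \<in> FD"
  shows "\<And>i. 0 \<le> lam $ i" "\<And>c. 0 \<le> mu c" "finite (fsupp mu)" "fsupp mu \<subseteq> C"
    "\<And>s c. 0 \<le> nu s c" "\<And>s. finite (fsupp (nu s))" "\<And>s. fsupp (nu s) \<subseteq> C"
    "\<And>s i. 0 \<le> piv s $ i"
    "\<And>c. (\<Sum>s\<in>UNIV. p s * nu s c) = mu c"
    "\<And>s c. nu s c \<le> mu c / (1 - \<alpha>)"
    "\<And>s. fsupp (nu s) \<subseteq> fsupp mu"
    "\<And>j. ((\<Sum>s\<in>UNIV. p s *\<^sub>R (piv s v* T s))
              - (\<Sum>s\<in>UNIV. p s *\<^sub>R fint (nu s) (\<lambda>c. c v* gbar s))) $ j \<le> (f + lam v* A) $ j"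
    "\<And>s j. (piv s v* W s - fint (nu s) (\<lambda>c. c v* gtil s)) $ j \<le> q s $ j"
proof -
  have D: "(\<forall>i. 0 \<le> lam $ i) \<and> fin_meas C mu \<and> (\<forall>s. fin_meas C (nu s)) \<and> (\<forall>s i. 0 \<le> piv s $ i)
     \<and> (\<forall>B\<subseteq>C. (\<Sum>s\<in>UNIV. p s * msr (nu s) B) = msr mu B)
     \<and> (\<forall>s. \<forall>B\<subseteq>C. msr (nu s) B \<le> msr mu B / (1 - \<alpha>))
     \<and> (\<forall>j. ((\<Sum>s\<in>UNIV. p s *\<^sub>R (piv s v* T s))
              - (\<Sum>s\<in>UNIV. p s *\<^sub>R fint (nu s) (\<lambda>c. c v* gbar s))) $ j
            \<le> (f + lam v* A) $ j)
     \<and> (\<forall>s j. (piv s v* W s - fint (nu s) (\<lambda>c. c v* gtil s)) $ j \<le> q s $ j)"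
    using assms unfolding feasD_def by simp
  show "\<And>i. 0 \<le> lam $ i" "\<And>c. 0 \<le> mu c" "finite (fsupp mu)" "fsupp mu \<subseteq> C"
    "\<And>s c. 0 \<le> nu s c" "\<And>s. finite (fsupp (nu s))" "\<And>s. fsupp (nu s) \<subseteq> C"
    "\<And>s i. 0 \<le> piv s $ i"
    "\<And>j. ((\<Sum>s\<in>UNIV. p s *\<^sub>R (piv s v* T s))
              - (\<Sum>s\<in>UNIV. p s *\<^sub>R fint (nu s) (\<lambda>c. c v* gbar s))) $ j \<le> (f + lam v* A) $ j"
    "\<And>s j. (piv s v* W s - fint (nu s) (\<lambda>c. c v* gtil s)) $ j \<le> q s $ j"
    using D unfolding fin_meas_def by auto
  have Dm: "fin_meas C mu" "\<And>s. fin_meas C (nu s)"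
    and D1: "\<And>B. B \<subseteq> C \<Longrightarrow> (\<Sum>s\<in>UNIV. p s * msr (nu s) B) = msr mu B"
    and D2: "\<And>s B. B \<subseteq> C \<Longrightarrow> msr (nu s) B \<le> msr mu B / (1 - \<alpha>)"
    using D by blast+
  have nu0: "0 \<le> nu s c" for s c using Dm(2)[of s] unfolding fin_meas_def by blast
  have pt: "(\<Sum>s\<in>UNIV. p s * nu s c) = mu c \<and> (\<forall>s. nu s c \<le> mu c / (1 - \<alpha>))" for c
  proof (cases "c \<in> C")
    case True
    then have "{c} \<subseteq> C" by simp
    then show ?thesis using D1[of "{c}"] D2[of "{c}"] unfolding msr_single by blast
  next
    case False
    have "mu c = 0" using Dm(1) False unfolding fin_meas_def fsupp_def by blast
    moreover have "nu s c = 0" for s using Dm(2)[of s] False unfolding fin_meas_def fsupp_def by blast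
    ultimately show ?thesis by simp
  qed
  then show pt1: "\<And>c. (\<Sum>s\<in>UNIV. p s * nu s c) = mu c" "\<And>s c. nu s c \<le> mu c / (1 - \<alpha>)" by auto
  show "\<And>s. fsupp (nu s) \<subseteq> fsupp mu"
  proof
    fix s c assume "c \<in> fsupp (nu s)"
    then have "nu s c \<noteq> 0" unfolding fsupp_def by simp
    then have "0 < nu s c" using nu0[of s c] by simp
    then have "0 < p s * nu s c" using p_pos by simp
    also have "p s * nu s c \<le> (\<Sum>s\<in>UNIV. p s * nu s c)"
      by (rule member_le_sum) (simp_all add: nu0 p_nonneg)
    finally show "c \<in> fsupp mu" unfolding fsupp_def using pt1(1)[of c] by auto
  qed
qed

lemma FP_facts:
  assumes "(x, y) \<in> FP"
  shows "\<And>i. (A *v x) $ i \<le> b $ i" "\<And>j. 0 \<le> x $ j" "\<And>s j. 0 \<le> y s $ j"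
    "\<And>s i. h s $ i \<le> (T s *v x + W s *v y s) $ i"
    "\<And>c. c \<in> C \<Longrightarrow> Lc x y c \<le> rZ c"
  using assms unfolding feasP_def by auto

lemma inner_nonneg_vec:
  fixes u v :: "real^'n::finite"
  shows "(\<And>i. 0 \<le> u$i) \<Longrightarrow> (\<And>i. 0 \<le> v$i) \<Longrightarrow> 0 \<le> u \<bullet> v"
  unfolding inner_vec_def by (auto intro!: sum_nonneg)

lemma inner_nonneg_eq0:
  fixes u v :: "real^'n::finite"
  shows "(\<And>i. 0 \<le> u$i) \<Longrightarrow> (\<And>i. 0 \<le> v$i) \<Longrightarrow> u \<bullet> v = 0 \<longleftrightarrow> (\<forall>i. u$i * v$i = 0)"
  unfolding inner_vec_def by (subst sum_nonneg_eq_0_iff) auto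

end

context LPsetup begin

lemma gap_identity:
  assumes xy: "(x, y) \<in> FP" and D: "(lam, mu, nu, piv) \<in> FD"
  shows "oP (x, y) - oD (lam, mu, nu, piv) =
     (\<Sum>c\<in>fsupp mu. mu c * (rZ c - Lc x y c))
   + (\<Sum>c\<in>fsupp mu. mu c * Lc x y c - (\<Sum>s\<in>UNIV. p s * nu s c * (c \<bullet> G x y s)))
   + lam \<bullet> (b - A *v x)
   + (\<Sum>s\<in>UNIV. p s * (piv s \<bullet> (T s *v x + W s *v y s - h s)))
   + (f + lam v* A - (\<Sum>s\<in>UNIV. p s *\<^sub>R (piv s v* T s))
                + (\<Sum>s\<in>UNIV. p s *\<^sub>R fint (nu s) (\<lambda>c. c v* gbar s))) \<bullet> x
   + (\<Sum>s\<in>UNIV. p s * ((q s - piv s v* W s + fint (nu s) (\<lambda>c. c v* gtil s)) \<bullet> y s))"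
proof -
  note DF = FD_facts[OF D]
  define F where "F = fsupp mu"
  define Gb where "Gb s = fint (nu s) (\<lambda>c. c v* gbar s)" for s
  define Gt where "Gt s = fint (nu s) (\<lambda>c. c v* gtil s)" for s
  have gb: "Gb s \<bullet> x = (\<Sum>c\<in>F. nu s c * (c \<bullet> (gbar s *v x)))" for s
    unfolding Gb_def F_def using DF(3) DF(11)[of s]
    by (simp add: fint_superset inner_sum_left dot_lmul_matrix)
  have gt: "Gt s \<bullet> y s = (\<Sum>c\<in>F. nu s c * (c \<bullet> (gtil s *v y s)))" for s
    unfolding Gt_def F_def using DF(3) DF(11)[of s]
    by (simp add: fint_superset inner_sum_left dot_lmul_matrix)
  have K1: "p s * (Gb s \<bullet> x + Gt s \<bullet> y s) = (\<Sum>c\<in>F. p s * nu s c * (c \<bullet> G x y s))" for s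
    unfolding gb gt ghat_def by (simp add: inner_add_right sum_distrib_left sum.distrib[symmetric] algebra_simps)
  have K: "(\<Sum>c\<in>F. \<Sum>s\<in>UNIV. p s * nu s c * (c \<bullet> G x y s)) = (\<Sum>s\<in>UNIV. p s * (Gb s \<bullet> x + Gt s \<bullet> y s))"
    unfolding K1 by (rule sum.swap)
  have T12: "(\<Sum>c\<in>F. mu c * (rZ c - Lc x y c)) + (\<Sum>c\<in>F. mu c * Lc x y c - (\<Sum>s\<in>UNIV. p s * nu s c * (c \<bullet> G x y s)))
      = (\<Sum>c\<in>F. mu c * rZ c) - (\<Sum>c\<in>F. \<Sum>s\<in>UNIV. p s * nu s c * (c \<bullet> G x y s))"
    by (simp add: sum.distrib[symmetric] sum_subtractf[symmetric] algebra_simps)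
  have fm: "fint mu rZ = (\<Sum>c\<in>F. mu c * rZ c)" unfolding fint_def F_def by simp
  have T3: "lam \<bullet> (b - A *v x) = lam \<bullet> b - lam \<bullet> (A *v x)" by (simp add: inner_diff_right)
  have T4: "(\<Sum>s\<in>UNIV. p s * (piv s \<bullet> (T s *v x + W s *v y s - h s))) =
     (\<Sum>s\<in>UNIV. p s * (piv s \<bullet> (T s *v x))) + (\<Sum>s\<in>UNIV. p s * (piv s \<bullet> (W s *v y s))) - (\<Sum>s\<in>UNIV. p s * (piv s \<bullet> h s))"
    by (simp add: inner_add_right inner_diff_right algebra_simps sum.distrib sum_subtractf)
  have T5: "(f + lam v* A - (\<Sum>s\<in>UNIV. p s *\<^sub>R (piv s v* T s)) + (\<Sum>s\<in>UNIV. p s *\<^sub>R Gb s)) \<bullet> x =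
     f \<bullet> x + lam \<bullet> (A *v x) - (\<Sum>s\<in>UNIV. p s * (piv s \<bullet> (T s *v x))) + (\<Sum>s\<in>UNIV. p s * (Gb s \<bullet> x))"
    by (simp add: inner_add_left inner_diff_left inner_sum_left dot_lmul_matrix)
  have T6: "(\<Sum>s\<in>UNIV. p s * ((q s - piv s v* W s + Gt s) \<bullet> y s)) =
     (\<Sum>s\<in>UNIV. p s * (q s \<bullet> y s)) - (\<Sum>s\<in>UNIV. p s * (piv s \<bullet> (W s *v y s))) + (\<Sum>s\<in>UNIV. p s * (Gt s \<bullet> y s))"
    by (simp add: inner_add_left inner_diff_left dot_lmul_matrix algebra_simps sum.distrib sum_subtractf)
  have KK: "(\<Sum>s\<in>UNIV. p s * (Gb s \<bullet> x + Gt s \<bullet> y s)) = (\<Sum>s\<in>UNIV. p s * (Gb s \<bullet> x)) + (\<Sum>s\<in>UNIV. p s * (Gt s \<bullet> y s))"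
    by (simp add: algebra_simps sum.distrib)
  have oP: "oP (x, y) = f \<bullet> x + (\<Sum>s\<in>UNIV. p s * (q s \<bullet> y s))" by (simp add: objP_def)
  have oD: "oD (lam, mu, nu, piv) = - fint mu rZ - lam \<bullet> b + (\<Sum>s\<in>UNIV. p s * (piv s \<bullet> h s))"
    by (simp add: objD_def)
  show ?thesis
    unfolding F_def[symmetric] Gb_def[symmetric] Gt_def[symmetric] T12 T3 T4 T5 T6 K KK oP oD fm
    by linarith
qed

lemma w_in_W:
  assumes D: "(lam, mu, nu, piv) \<in> FD" and c: "c \<in> fsupp mu"
  shows "0 < mu c" "(\<chi> s. p s * nu s c / mu c) \<in> Wset p \<alpha>"
    "\<And>V. mu c * (\<Sum>s\<in>UNIV. (\<chi> s. p s * nu s c / mu c)$s * V s) = (\<Sum>s\<in>UNIV. p s * nu s c * V s)"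
proof -
  note DF = FD_facts[OF D]
  show m0: "0 < mu c" using c DF(2)[of c] unfolding fsupp_def by (simp add: less_le)
  have "0 \<le> p s * nu s c / mu c" for s using DF(5) p_nonneg m0 by simp
  moreover have "p s * nu s c / mu c \<le> p s / (1 - \<alpha>)" for s
  proof -
    have "nu s c \<le> mu c / (1 - \<alpha>)" by (rule DF(10))
    then have "p s * nu s c \<le> p s * (mu c / (1 - \<alpha>))" using p_nonneg by (rule mult_left_mono)
    then show ?thesis using m0 by (simp add: divide_le_eq field_simps)
  qed
  moreover have "(\<Sum>s\<in>UNIV. p s * nu s c / mu c) = 1"
    using DF(9)[of c] m0 by (simp add: sum_divide_distrib[symmetric])
  ultimately show "(\<chi> s. p s * nu s c / mu c) \<in> Wset p \<alpha>" unfolding Wset_def by simp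
  show "\<And>V. mu c * (\<Sum>s\<in>UNIV. (\<chi> s. p s * nu s c / mu c)$s * V s) = (\<Sum>s\<in>UNIV. p s * nu s c * V s)"
    using m0 by (simp add: sum_distrib_left)
qed

end

context LPsetup begin

lemma sum_pos_weights_eq0:
  fixes a :: "'s \<Rightarrow> real"
  assumes "\<And>s. 0 \<le> a s"
  shows "(\<Sum>s\<in>UNIV. p s * a s) = 0 \<longleftrightarrow> (\<forall>s. a s = 0)"
proof -
  have "(\<Sum>s\<in>UNIV. p s * a s) = 0 \<longleftrightarrow> (\<forall>s\<in>UNIV. p s * a s = 0)"
    by (rule sum_nonneg_eq_0_iff) (auto intro: mult_nonneg_nonneg p_nonneg assms)
  also have "\<dots> \<longleftrightarrow> (\<forall>s. a s = 0)" using p_pos by (simp add: less_imp_neq[symmetric])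
  finally show ?thesis .
qed

lemma cs_main:
  assumes xy: "(x, y) \<in> FP" and D: "(lam, mu, nu, piv) \<in> FD"
  shows "oD (lam, mu, nu, piv) \<le> oP (x, y)"
    "oP (x, y) = oD (lam, mu, nu, piv) \<longleftrightarrow>
           (support C mu \<subseteq> {c. cvar p \<alpha> (\<lambda>s. c \<bullet> ghat gbar gtil x y s) = cvar qZ \<alpha> (\<lambda>k. c \<bullet> z k)})
           \<and> (\<forall>s. support C (nu s) \<subseteq>
                 {c. var p \<alpha> (\<lambda>s'. c \<bullet> ghat gbar gtil x y s') \<le> ereal (c \<bullet> ghat gbar gtil x y s)})
           \<and> (\<forall>s. support C (\<lambda>c. mu c / (1 - \<alpha>) - nu s c) \<subseteq>
                 {c. ereal (c \<bullet> ghat gbar gtil x y s) \<le> var p \<alpha> (\<lambda>s'. c \<bullet> ghat gbar gtil x y s')})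
           \<and> lam \<bullet> (b - A *v x) = 0
           \<and> (\<forall>s. piv s \<bullet> (T s *v x + W s *v y s - h s) = 0)
           \<and> (f + lam v* A - (\<Sum>s\<in>UNIV. p s *\<^sub>R (piv s v* T s))
                + (\<Sum>s\<in>UNIV. p s *\<^sub>R fint (nu s) (\<lambda>c. c v* gbar s))) \<bullet> x = 0
           \<and> (\<forall>s. (q s - piv s v* W s + fint (nu s) (\<lambda>c. c v* gtil s)) \<bullet> y s = 0)"
    (is "?eq \<longleftrightarrow> ?R")
proof -
  note DF = FD_facts[OF D]
  note PF = FP_facts[OF xy]
  define F where "F = fsupp mu"
  have finF: "finite F" using DF(3) unfolding F_def .
  have FC: "F \<subseteq> C" using DF(4) unfolding F_def .
  define wv where "wv c = (\<chi> s. p s * nu s c / mu c)" for c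
  have mpos: "c \<in> F \<Longrightarrow> 0 < mu c" for c using w_in_W(1)[OF D] unfolding F_def by blast
  have wW: "c \<in> F \<Longrightarrow> wv c \<in> Wset p \<alpha>" for c using w_in_W(2)[OF D] unfolding F_def wv_def by blast
  have wmul: "c \<in> F \<Longrightarrow> mu c * (\<Sum>s\<in>UNIV. wv c $ s * V s) = (\<Sum>s\<in>UNIV. p s * nu s c * V s)" for c V
    using w_in_W(3)[OF D] unfolding F_def wv_def by blast
  define t1 where "t1 = (\<Sum>c\<in>F. mu c * (rZ c - Lc x y c))"
  define t2 where "t2 = (\<Sum>c\<in>F. mu c * Lc x y c - (\<Sum>s\<in>UNIV. p s * nu s c * (c \<bullet> G x y s)))"
  define t3 where "t3 = lam \<bullet> (b - A *v x)"
  define t4 where "t4 = (\<Sum>s\<in>UNIV. p s * (piv s \<bullet> (T s *v x + W s *v y s - h s)))"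
  define t5 where "t5 = (f + lam v* A - (\<Sum>s\<in>UNIV. p s *\<^sub>R (piv s v* T s))
                + (\<Sum>s\<in>UNIV. p s *\<^sub>R fint (nu s) (\<lambda>c. c v* gbar s))) \<bullet> x"
  define t6 where "t6 = (\<Sum>s\<in>UNIV. p s * ((q s - piv s v* W s + fint (nu s) (\<lambda>c. c v* gtil s)) \<bullet> y s))"
  have gap: "oP (x, y) - oD (lam, mu, nu, piv) = t1 + t2 + t3 + t4 + t5 + t6"
    unfolding t1_def t2_def t3_def t4_def t5_def t6_def F_def by (rule gap_identity[OF xy D])
  have a1: "c \<in> F \<Longrightarrow> 0 \<le> mu c * (rZ c - Lc x y c)" for c
    using PF(5)[of c] FC DF(2)[of c] by auto
  have t1: "0 \<le> t1" unfolding t1_def by (rule sum_nonneg) (rule a1)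
  have supp: "support C mu = F" unfolding support_def F_def fsupp_def using DF(2,4)
    by (auto simp: fsupp_def less_le)
  have t1z: "t1 = 0 \<longleftrightarrow> support C mu \<subseteq> {c. Lc x y c = rZ c}"
  proof -
    have "t1 = 0 \<longleftrightarrow> (\<forall>c\<in>F. mu c * (rZ c - Lc x y c) = 0)"
      unfolding t1_def using finF a1 by (rule sum_nonneg_eq_0_iff)
    also have "\<dots> \<longleftrightarrow> (\<forall>c\<in>F. Lc x y c = rZ c)" using mpos by (auto simp: less_imp_neq[symmetric])
    finally show ?thesis unfolding supp by auto
  qed
  have a2eq: "mu c * Lc x y c - (\<Sum>s\<in>UNIV. p s * nu s c * (c \<bullet> G x y s))
      = mu c * (Lc x y c - (\<Sum>s\<in>UNIV. wv c $ s * (c \<bullet> G x y s)))" if "c \<in> F" for c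
    using wmul[OF that, of "\<lambda>s. c \<bullet> G x y s"] by (simp add: right_diff_distrib)
  have a2: "0 \<le> mu c * Lc x y c - (\<Sum>s\<in>UNIV. p s * nu s c * (c \<bullet> G x y s))" if "c \<in> F" for c
    unfolding a2eq[OF that] using mpos[OF that] cvar_ge[of p \<alpha>, OF p_nonneg alpha(2) wW[OF that]] by simp
  have t2: "0 \<le> t2" unfolding t2_def by (rule sum_nonneg) (rule a2)
  define cond where "cond c \<longleftrightarrow> (\<forall>s. 0 < nu s c \<longrightarrow> var p \<alpha> (\<lambda>s'. c \<bullet> G x y s') \<le> ereal (c \<bullet> G x y s))
       \<and> (\<forall>s. 0 < mu c / (1 - \<alpha>) - nu s c \<longrightarrow> ereal (c \<bullet> G x y s) \<le> var p \<alpha> (\<lambda>s'. c \<bullet> G x y s'))" for c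
  have a2z: "mu c * Lc x y c - (\<Sum>s\<in>UNIV. p s * nu s c * (c \<bullet> G x y s)) = 0 \<longleftrightarrow> cond c" if c: "c \<in> F" for c
  proof -
    have "mu c * Lc x y c - (\<Sum>s\<in>UNIV. p s * nu s c * (c \<bullet> G x y s)) = 0 \<longleftrightarrow>
        (\<Sum>s\<in>UNIV. wv c $ s * (c \<bullet> G x y s)) = Lc x y c"
      unfolding a2eq[OF c] using mpos[OF c] by auto
    also have "\<dots> \<longleftrightarrow> (\<forall>s. 0 < wv c $ s \<longrightarrow> var p \<alpha> (\<lambda>s'. c \<bullet> G x y s') \<le> ereal (c \<bullet> G x y s)) \<and>
     (\<forall>s. 0 < p s / (1 - \<alpha>) - wv c $ s \<longrightarrow> ereal (c \<bullet> G x y s) \<le> var p \<alpha> (\<lambda>s'. c \<bullet> G x y s'))"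
      by (rule cs_char[OF p_pos p_sum alpha wW[OF c]])
    also have "\<dots> \<longleftrightarrow> cond c"
    proof -
      have e1: "0 < wv c $ s \<longleftrightarrow> 0 < nu s c" for s
        unfolding wv_def using mpos[OF c] p_pos[of s] by (simp add: zero_less_mult_iff zero_less_divide_iff)
      have e2: "0 < p s / (1 - \<alpha>) - wv c $ s \<longleftrightarrow> 0 < mu c / (1 - \<alpha>) - nu s c" for s
      proof -
        have "p s / (1 - \<alpha>) - wv c $ s = (p s / mu c) * (mu c / (1 - \<alpha>) - nu s c)"
          unfolding wv_def using mpos[OF c] by (simp add: field_simps)
        moreover have "0 < p s / mu c" using mpos[OF c] p_pos[of s] by simp
        ultimately show ?thesis by (metis zero_less_mult_pos mult_pos_pos diff_gt_0_iff_gt)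
      qed
      show ?thesis unfolding cond_def e1 e2 ..
    qed
    finally show ?thesis .
  qed
  have t2z: "t2 = 0 \<longleftrightarrow> (\<forall>c\<in>F. cond c)"
  proof -
    have "t2 = 0 \<longleftrightarrow> (\<forall>c\<in>F. mu c * Lc x y c - (\<Sum>s\<in>UNIV. p s * nu s c * (c \<bullet> G x y s)) = 0)"
      unfolding t2_def using finF a2 by (rule sum_nonneg_eq_0_iff)
    then show ?thesis using a2z by auto
  qed
  have condiff: "(\<forall>c\<in>F. cond c) \<longleftrightarrow>
      (\<forall>s. support C (nu s) \<subseteq> {c. var p \<alpha> (\<lambda>s'. c \<bullet> G x y s') \<le> ereal (c \<bullet> G x y s)})
    \<and> (\<forall>s. support C (\<lambda>c. mu c / (1 - \<alpha>) - nu s c) \<subseteq> {c. ereal (c \<bullet> G x y s) \<le> var p \<alpha> (\<lambda>s'. c \<bullet> G x y s')})"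
  proof -
    have n1: "c \<in> F" if "0 < nu s c" for s c
    proof -
      have "c \<in> fsupp (nu s)" using that unfolding fsupp_def by simp
      then show ?thesis using DF(11)[of s] unfolding F_def by blast
    qed
    have n2: "c \<in> F" if "0 < mu c / (1 - \<alpha>) - nu s c" for s c
    proof -
      have "0 < mu c / (1 - \<alpha>)" using that DF(5)[of s c] by linarith
      then have "mu c \<noteq> 0" by auto
      then show ?thesis unfolding F_def fsupp_def by simp
    qed
    show ?thesis unfolding cond_def support_def using n1 n2 FC by blast
  qed
  have t3: "0 \<le> t3" unfolding t3_def
    by (rule inner_nonneg_vec) (use DF(1) PF(1) in auto)
  have a4: "0 \<le> piv s \<bullet> (T s *v x + W s *v y s - h s)" for s
    by (rule inner_nonneg_vec) (use DF(8) PF(4) in auto)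
  have t4: "0 \<le> t4" unfolding t4_def by (rule sum_nonneg) (simp add: a4 p_nonneg)
  have t4z: "t4 = 0 \<longleftrightarrow> (\<forall>s. piv s \<bullet> (T s *v x + W s *v y s - h s) = 0)"
    unfolding t4_def by (rule sum_pos_weights_eq0) (rule a4)
  have t5: "0 \<le> t5" unfolding t5_def
  proof (rule inner_nonneg_vec)
    fix j
    have "(f + lam v* A - (\<Sum>s\<in>UNIV. p s *\<^sub>R (piv s v* T s))
                + (\<Sum>s\<in>UNIV. p s *\<^sub>R fint (nu s) (\<lambda>c. c v* gbar s))) $ j =
          (f + lam v* A) $ j - ((\<Sum>s\<in>UNIV. p s *\<^sub>R (piv s v* T s))
              - (\<Sum>s\<in>UNIV. p s *\<^sub>R fint (nu s) (\<lambda>c. c v* gbar s))) $ j" by simp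
    then show "0 \<le> (f + lam v* A - (\<Sum>s\<in>UNIV. p s *\<^sub>R (piv s v* T s))
                + (\<Sum>s\<in>UNIV. p s *\<^sub>R fint (nu s) (\<lambda>c. c v* gbar s))) $ j"
      using DF(12)[of j] by linarith
  qed (rule PF(2))
  have a6: "0 \<le> (q s - piv s v* W s + fint (nu s) (\<lambda>c. c v* gtil s)) \<bullet> y s" for s
  proof (rule inner_nonneg_vec)
    fix j
    have "(q s - piv s v* W s + fint (nu s) (\<lambda>c. c v* gtil s)) $ j =
       q s $ j - (piv s v* W s - fint (nu s) (\<lambda>c. c v* gtil s)) $ j" by simp
    then show "0 \<le> (q s - piv s v* W s + fint (nu s) (\<lambda>c. c v* gtil s)) $ j"
      using DF(13)[of s j] by linarith
  qed (rule PF(3))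
  have t6: "0 \<le> t6" unfolding t6_def by (rule sum_nonneg) (simp add: a6 p_nonneg)
  have t6z: "t6 = 0 \<longleftrightarrow> (\<forall>s. (q s - piv s v* W s + fint (nu s) (\<lambda>c. c v* gtil s)) \<bullet> y s = 0)"
    unfolding t6_def by (rule sum_pos_weights_eq0) (rule a6)
  show "oD (lam, mu, nu, piv) \<le> oP (x, y)" using gap t1 t2 t3 t4 t5 t6 by linarith
  have "oP (x, y) = oD (lam, mu, nu, piv) \<longleftrightarrow> t1 = 0 \<and> t2 = 0 \<and> t3 = 0 \<and> t4 = 0 \<and> t5 = 0 \<and> t6 = 0"
    using gap t1 t2 t3 t4 t5 t6 by linarith
  also have "\<dots> \<longleftrightarrow> ?R"
    unfolding t1z t2z condiff t4z t6z t3_def[symmetric] t5_def[symmetric] by blast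
  finally show "?eq \<longleftrightarrow> ?R" .
qed

end

lemma finite_hull_exists:
  fixes P :: "'a::finite \<Rightarrow> real"
  shows "\<exists>E. finite E \<and> convex hull E = Wset P \<alpha>"
  using W_polytope[of P \<alpha>] unfolding polytope_def by metis

lemma bounded_unit_simplex: "bounded (unit_simplex :: (real^'d::finite) set)"
proof (rule bounded_subset[OF bounded_cbox[of 0 "(\<chi> i. 1) :: real^'d"]])
  show "unit_simplex \<subseteq> cbox 0 ((\<chi> i. 1) :: real^'d)"
  proof
    fix c :: "real^'d" assume "c \<in> unit_simplex"
    then have c: "\<And>i. 0 \<le> c$i" "(\<Sum>i\<in>UNIV. c$i) = 1" unfolding unit_simplex_def by auto
    have "c$i \<le> 1" for i using member_le_sum[of i UNIV "\<lambda>i. c$i"] c by auto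
    then show "c \<in> cbox 0 ((\<chi> i. 1) :: real^'d)" using c by (auto simp: mem_box_cart)
  qed
qed

context LPsetup begin

definition "Ep = (SOME E. finite E \<and> convex hull E = Wset p \<alpha>)"
definition "EZ = (SOME E. finite E \<and> convex hull E = Wset qZ \<alpha>)"

lemma Ep: "finite Ep" "convex hull Ep = Wset p \<alpha>"
  using someI_ex[OF finite_hull_exists[of p \<alpha>]] unfolding Ep_def by auto
lemma EZ: "finite EZ" "convex hull EZ = Wset qZ \<alpha>"
  using someI_ex[OF finite_hull_exists[of qZ \<alpha>]] unfolding EZ_def by auto

definition aZ :: "real^'k \<Rightarrow> real^'d" where "aZ e = (\<Sum>k\<in>UNIV. e$k *\<^sub>R z k)"

lemma aZ_inner: "c \<bullet> aZ e = (\<Sum>k\<in>UNIV. e$k * (c \<bullet> z k))"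
  unfolding aZ_def by (simp add: inner_sum_right)

lemma rZ_max: "\<forall>e\<in>EZ. c \<bullet> aZ e \<le> rZ c" "\<exists>e\<in>EZ. rZ c \<le> c \<bullet> aZ e"
  using cvar_max[OF qZ_nonneg qZ_sum alpha EZ(2), of "\<lambda>k. c \<bullet> z k"] unfolding aZ_inner by auto

lemma Lc_max: "\<forall>e\<in>Ep. (\<Sum>s\<in>UNIV. e$s * (c \<bullet> G x y s)) \<le> Lc x y c"
   "\<exists>e\<in>Ep. Lc x y c \<le> (\<Sum>s\<in>UNIV. e$s * (c \<bullet> G x y s))"
  using cvar_max[OF p_nonneg p_sum alpha Ep(2), of "\<lambda>s. c \<bullet> G x y s"] by auto

lemma EZ_ne: "EZ \<noteq> {}"
  using P_in_W[OF qZ_nonneg qZ_sum alpha] EZ(2) by auto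

definition "Rg e = C \<inter> {c. \<forall>e'\<in>EZ. c \<bullet> aZ e' \<le> c \<bullet> aZ e}"

lemma Rg_polytope: "polytope (Rg e)"
proof -
  have eq: "Rg e = C \<inter> \<Inter>((\<lambda>e'. {c. (aZ e' - aZ e) \<bullet> c \<le> 0}) ` EZ)"
    unfolding Rg_def by (auto simp: inner_diff_left inner_diff_right inner_commute)
  have "polyhedron (Rg e)" unfolding eq using EZ(1) C_poly
    by (intro polyhedron_Int polyhedron_Inter) (auto simp: polyhedron_halfspace_le)
  moreover have "bounded (Rg e)"
    by (rule bounded_subset[OF bounded_unit_simplex]) (use C_simplex in \<open>auto simp: Rg_def\<close>)
  ultimately show ?thesis by (simp add: polytope_eq_bounded_polyhedron)
qed

definition "VR e = (SOME V. finite V \<and> Rg e = convex hull V)"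

lemma VR: "finite (VR e)" "Rg e = convex hull (VR e)"
  using someI_ex[of "\<lambda>V. finite V \<and> Rg e = convex hull V"] Rg_polytope[of e]
  unfolding polytope_def VR_def by auto

definition "VS = (\<Union>e\<in>EZ. VR e)"

lemma VS: "finite VS" "VS \<subseteq> C"
proof -
  show "finite VS" unfolding VS_def using EZ(1) VR(1) by auto
  have "VR e \<subseteq> C" for e using hull_subset[of "VR e" convex] VR(2)[of e] unfolding Rg_def by auto
  then show "VS \<subseteq> C" unfolding VS_def by auto
qed

lemma reform:
  "(\<forall>c\<in>C. Lc x y c \<le> rZ c) \<longleftrightarrow> (\<forall>c\<in>VS. \<forall>e\<in>Ep. (\<Sum>s\<in>UNIV. e$s * (c \<bullet> G x y s)) \<le> rZ c)"
proof
  assume H: "\<forall>c\<in>C. Lc x y c \<le> rZ c"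
  show "\<forall>c\<in>VS. \<forall>e\<in>Ep. (\<Sum>s\<in>UNIV. e$s * (c \<bullet> G x y s)) \<le> rZ c"
    using H VS(2) Lc_max(1) by (meson order_trans subsetD)
next
  assume H: "\<forall>c\<in>VS. \<forall>e\<in>Ep. (\<Sum>s\<in>UNIV. e$s * (c \<bullet> G x y s)) \<le> rZ c"
  show "\<forall>c\<in>C. Lc x y c \<le> rZ c"
  proof
    fix c assume cC: "c \<in> C"
    have "Max ((\<lambda>e. c \<bullet> aZ e) ` EZ) \<in> (\<lambda>e. c \<bullet> aZ e) ` EZ"
      by (rule Max_in) (use EZ(1) EZ_ne in auto)
    then obtain e0 where e0: "e0 \<in> EZ" "c \<bullet> aZ e0 = Max ((\<lambda>e. c \<bullet> aZ e) ` EZ)"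
      by (metis (no_types, lifting) imageE)
    have cR: "c \<in> Rg e0" unfolding Rg_def using cC e0 EZ(1) by auto
    obtain e' where e': "e' \<in> Ep" "Lc x y c \<le> (\<Sum>s\<in>UNIV. e'$s * (c \<bullet> G x y s))"
      using Lc_max(2) by blast
    define l where "l = (\<Sum>s\<in>UNIV. e'$s *\<^sub>R G x y s) - aZ e0"
    have l: "l \<bullet> c' = (\<Sum>s\<in>UNIV. e'$s * (c' \<bullet> G x y s)) - c' \<bullet> aZ e0" for c'
      unfolding inner_commute[of l c'] unfolding l_def by (simp add: inner_diff_right inner_sum_right)
    have "l \<bullet> v \<le> 0" if v: "v \<in> VR e0" for v
    proof -
      have vR: "v \<in> Rg e0" using v VR(2)[of e0] hull_subset[of "VR e0" convex] by auto
      have vVS: "v \<in> VS" unfolding VS_def using v e0(1) by auto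
      obtain e1 where e1: "e1 \<in> EZ" "rZ v \<le> v \<bullet> aZ e1" using rZ_max(2) by blast
      have "v \<bullet> aZ e1 \<le> v \<bullet> aZ e0" using vR e1(1) unfolding Rg_def by auto
      then show ?thesis unfolding l using H vVS e'(1) e1(2) by fastforce
    qed
    moreover obtain v where "v \<in> VR e0" "l \<bullet> c \<le> l \<bullet> v"
      using hull_lin_max[of c "VR e0" l] cR VR(2)[of e0] by auto
    ultimately have "l \<bullet> c \<le> 0" by fastforce
    then have "(\<Sum>s\<in>UNIV. e'$s * (c \<bullet> G x y s)) \<le> c \<bullet> aZ e0" unfolding l by simp
    also have "c \<bullet> aZ e0 \<le> rZ c" using rZ_max(1) e0(1) by blast
    finally show "Lc x y c \<le> rZ c" using e'(2) by linarith
  qed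
qed

end

datatype ('a,'b,'c,'d,'e,'f) cix = CA 'a | CX 'b | CY 'c 'd | CT 'c 'e | CC 'f

context LPsetup begin

definition Ix :: "('m1,'n1,'s,'n2,'m2, (real^'d) \<times> (real^'s)) cix set" where
  "Ix = range CA \<union> range CX \<union> (\<lambda>(s,j). CY s j) ` UNIV \<union> (\<lambda>(s,i). CT s i) ` UNIV \<union> CC ` (VS \<times> Ep)"

lemma Ix_finite: "finite Ix"
  unfolding Ix_def using VS(1) Ep(1) by simp

lemma Ix_ball:
  "(\<forall>i\<in>Ix. P i) \<longleftrightarrow> (\<forall>r. P (CA r)) \<and> (\<forall>j. P (CX j)) \<and> (\<forall>s j. P (CY s j)) \<and> (\<forall>s r. P (CT s r))
      \<and> (\<forall>c\<in>VS. \<forall>e\<in>Ep. P (CC (c, e)))"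
  unfolding Ix_def by (auto simp: ball_Un)

lemma Ix_sum:
  fixes F :: "('m1,'n1,'s,'n2,'m2, (real^'d) \<times> (real^'s)) cix \<Rightarrow> 'x::comm_monoid_add"
  shows "(\<Sum>i\<in>Ix. F i) = (\<Sum>r\<in>UNIV. F (CA r)) + (\<Sum>j\<in>UNIV. F (CX j)) + (\<Sum>s\<in>UNIV. \<Sum>j\<in>UNIV. F (CY s j))
     + (\<Sum>s\<in>UNIV. \<Sum>r\<in>UNIV. F (CT s r)) + (\<Sum>c\<in>VS. \<Sum>e\<in>Ep. F (CC (c, e)))"
proof -
  have fin: "finite (VS \<times> Ep)" using VS(1) Ep(1) by simp
  have s5: "(\<Sum>i\<in>CC ` (VS \<times> Ep). F i) = (\<Sum>c\<in>VS. \<Sum>e\<in>Ep. F (CC (c, e)))"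
    by (subst sum.reindex) (auto simp: inj_on_def sum.cartesian_product)
  have s4: "(\<Sum>i\<in>(\<lambda>(s,i). CT s i) ` UNIV. F i) = (\<Sum>s\<in>UNIV. \<Sum>r\<in>UNIV. F (CT s r))"
    by (subst sum.reindex) (auto simp: inj_on_def sum.cartesian_product case_prod_beta)
  have s3: "(\<Sum>i\<in>(\<lambda>(s,j). CY s j) ` UNIV. F i) = (\<Sum>s\<in>UNIV. \<Sum>j\<in>UNIV. F (CY s j))"
    by (subst sum.reindex) (auto simp: inj_on_def sum.cartesian_product case_prod_beta)
  have s2: "(\<Sum>i\<in>range CX. F i) = (\<Sum>j\<in>UNIV. F (CX j))" by (subst sum.reindex) (auto simp: inj_on_def)
  have s1: "(\<Sum>i\<in>range CA. F i) = (\<Sum>r\<in>UNIV. F (CA r))" by (subst sum.reindex) (auto simp: inj_on_def)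
  show ?thesis unfolding Ix_def
    apply (subst sum.union_disjoint, use fin in auto)+
    unfolding s1 s2 s3 s4 s5 by simp
qed


definition ca :: "('m1,'n1,'s,'n2,'m2, (real^'d) \<times> (real^'s)) cix \<Rightarrow> (real^'n1) \<times> (real^'n2^'s)" where
  "ca i = (case i of CA r \<Rightarrow> (- (A $ r), 0) | CX j \<Rightarrow> (axis j 1, 0) | CY s j \<Rightarrow> (0, axis s (axis j 1))
     | CT s r \<Rightarrow> (T s $ r, axis s (W s $ r))
     | CC ce \<Rightarrow> (- (\<Sum>s\<in>UNIV. (snd ce)$s *\<^sub>R (fst ce v* gbar s)), - (\<chi> s. (snd ce)$s *\<^sub>R (fst ce v* gtil s))))"

definition cb :: "('m1,'n1,'s,'n2,'m2, (real^'d) \<times> (real^'s)) cix \<Rightarrow> real" where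
  "cb i = (case i of CA r \<Rightarrow> - (b $ r) | CX j \<Rightarrow> 0 | CY s j \<Rightarrow> 0 | CT s r \<Rightarrow> h s $ r | CC ce \<Rightarrow> - rZ (fst ce))"

definition cg :: "(real^'n1) \<times> (real^'n2^'s)" where "cg = (f, \<chi> s. p s *\<^sub>R q s)"

lemma ca_inner:
  "ca (CA r1) \<bullet> (x, Y) = - (A *v x) $ r1"
  "ca (CX j) \<bullet> (x, Y) = x $ j"
  "ca (CY s k) \<bullet> (x, Y) = Y $ s $ k"
  "ca (CT s r) \<bullet> (x, Y) = (T s *v x + W s *v Y $ s) $ r"
  "ca (CC (c, e)) \<bullet> (x, Y) = - (\<Sum>s\<in>UNIV. e$s * (c \<bullet> G x (\<lambda>s. Y$s) s))"
proof -
  show "ca (CA r1) \<bullet> (x, Y) = - (A *v x) $ r1" by (simp add: ca_def matrix_vector_mul_component)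
  show "ca (CX j) \<bullet> (x, Y) = x $ j" by (simp add: ca_def inner_axis')
  show "ca (CY s k) \<bullet> (x, Y) = Y $ s $ k" by (simp add: ca_def inner_axis')
  show "ca (CT s r) \<bullet> (x, Y) = (T s *v x + W s *v Y $ s) $ r"
    by (simp add: ca_def inner_axis' matrix_vector_mul_component)
  have "(\<chi> s. e$s *\<^sub>R (c v* gtil s)) \<bullet> Y = (\<Sum>s\<in>UNIV. e$s * (c \<bullet> (gtil s *v Y $ s)))"
    by (simp add: inner_vec_def[of "\<chi> s. e$s *\<^sub>R (c v* gtil s)"] dot_lmul_matrix)
  then show "ca (CC (c, e)) \<bullet> (x, Y) = - (\<Sum>s\<in>UNIV. e$s * (c \<bullet> G x (\<lambda>s. Y$s) s))"
    by (simp add: ca_def ghat_def inner_sum_left dot_lmul_matrix inner_add_right distrib_left sum.distrib)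
qed

lemma cg_inner: "cg \<bullet> (x, Y) = oP (x, \<lambda>s. Y$s)"
  by (simp add: cg_def objP_def inner_vec_def[of "\<chi> s. p s *\<^sub>R q s"])

lemma LP_feas: "(\<forall>i\<in>Ix. cb i \<le> ca i \<bullet> (x, Y)) \<longleftrightarrow> (x, \<lambda>s. Y$s) \<in> FP"
proof -
  have "(\<forall>i\<in>Ix. cb i \<le> ca i \<bullet> (x, Y)) \<longleftrightarrow>
     (\<forall>r. (A *v x) $ r \<le> b $ r) \<and> (\<forall>j. 0 \<le> x $ j) \<and> (\<forall>s j. 0 \<le> Y $ s $ j) \<and>
     (\<forall>s r. h s $ r \<le> (T s *v x + W s *v Y $ s) $ r) \<and>
     (\<forall>c\<in>VS. \<forall>e\<in>Ep. (\<Sum>s\<in>UNIV. e$s * (c \<bullet> G x (\<lambda>s. Y$s) s)) \<le> rZ c)"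
    unfolding Ix_ball ca_inner by (simp add: cb_def)
  also have "\<dots> \<longleftrightarrow> (x, \<lambda>s. Y$s) \<in> FP"
    unfolding reform[symmetric] by (simp add: feasP_def)
  finally show ?thesis .
qed

end

lemma vm_sum: "(v::real^'m::finite) v* (M::real^'n::finite^'m) = (\<Sum>r\<in>UNIV. v$r *\<^sub>R M$r)"
  by (simp add: vec_eq_iff vector_matrix_mult_def sum_component mult.commute)

lemma axis_sum: "(\<Sum>j\<in>UNIV. a j *\<^sub>R axis j (1::real)) = (\<chi> j. a j)"
proof -
  have "(\<Sum>x\<in>UNIV. a x * (if i = x then 1 else 0)) = a i" for i :: 'a
  proof -
    have "(\<Sum>x\<in>UNIV. a x * (if i = x then 1 else 0)) = (\<Sum>x\<in>UNIV. if x = i then a x else 0)"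
      by (rule sum.cong) auto
    then show ?thesis by simp
  qed
  then show ?thesis by (simp add: vec_eq_iff sum_component axis_def)
qed

context LPsetup begin

lemma Ep_W: "e \<in> Ep \<Longrightarrow> e \<in> Wset p \<alpha>"
  using hull_subset[of Ep convex] Ep(2) by auto

definition mkD :: "(('m1,'n1,'s,'n2,'m2, (real^'d) \<times> (real^'s)) cix \<Rightarrow> real)
   \<Rightarrow> (real^'m1) \<times> (real^'d \<Rightarrow> real) \<times> ('s \<Rightarrow> real^'d \<Rightarrow> real) \<times> ('s \<Rightarrow> real^'m2)" where
  "mkD y = ((\<chi> r. y (CA r)),
           (\<lambda>c. if c \<in> VS then \<Sum>e\<in>Ep. y (CC (c, e)) else 0),
           (\<lambda>s c. if c \<in> VS then \<Sum>e\<in>Ep. y (CC (c, e)) * e$s / p s else 0),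
           (\<lambda>s. \<chi> r. y (CT s r) / p s))"

lemma mkD_basic:
  assumes y: "\<forall>i\<in>Ix. 0 \<le> y i" and D: "mkD y = (lam, mu, nu, piv)"
  shows "\<And>i. 0 \<le> lam $ i" "fin_meas C mu" "\<And>s. fin_meas C (nu s)" "\<And>s i. 0 \<le> piv s $ i"
    "fsupp mu \<subseteq> VS" "\<And>s. fsupp (nu s) \<subseteq> VS"
    "\<And>c. c \<in> VS \<Longrightarrow> (\<Sum>s\<in>UNIV. p s * nu s c) = mu c"
    "\<And>s c. nu s c \<le> mu c / (1 - \<alpha>)"
    "\<forall>B\<subseteq>C. (\<Sum>s\<in>UNIV. p s * msr (nu s) B) = msr mu B"
    "\<forall>s. \<forall>B\<subseteq>C. msr (nu s) B \<le> msr mu B / (1 - \<alpha>)"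
proof -
  have yA: "0 \<le> y (CA r)" for r using y unfolding Ix_ball by blast
  have yT: "0 \<le> y (CT s r)" for s r using y unfolding Ix_ball by blast
  have yC: "c \<in> VS \<Longrightarrow> e \<in> Ep \<Longrightarrow> 0 \<le> y (CC (c, e))" for c e using y unfolding Ix_ball by blast
  have lam: "lam = (\<chi> r. y (CA r))" and mu: "mu = (\<lambda>c. if c \<in> VS then \<Sum>e\<in>Ep. y (CC (c, e)) else 0)"
    and nu: "nu = (\<lambda>s c. if c \<in> VS then \<Sum>e\<in>Ep. y (CC (c, e)) * e$s / p s else 0)"
    and piv: "piv = (\<lambda>s. \<chi> r. y (CT s r) / p s)"
    using D unfolding mkD_def by auto
  have eW: "e \<in> Ep \<Longrightarrow> 0 \<le> e$s \<and> e$s \<le> p s / (1 - \<alpha>) \<and> (\<Sum>s\<in>UNIV. e$s) = 1" for e s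
    using Ep_W[of e] unfolding Wset_def by auto
  show "\<And>i. 0 \<le> lam $ i" unfolding lam using yA by simp
  show "\<And>s i. 0 \<le> piv s $ i" unfolding piv using yT p_pos by (simp add: less_imp_le)
  have mu0: "0 \<le> mu c" for c unfolding mu using yC by (auto intro: sum_nonneg)
  have nu0: "0 \<le> nu s c" for s c
  proof (cases "c \<in> VS")
    case True
    have "0 \<le> y (CC (c, e)) * e$s / p s" if "e \<in> Ep" for e
      using yC[OF True that] eW[OF that, of s] p_pos[of s] by simp
    then show ?thesis unfolding nu using True by (simp add: sum_nonneg)
  qed (simp add: nu)
  show fm: "fsupp mu \<subseteq> VS" unfolding fsupp_def mu by auto
  show fn: "\<And>s. fsupp (nu s) \<subseteq> VS" unfolding fsupp_def nu by auto
  show "fin_meas C mu" unfolding fin_meas_def using mu0 fm VS(2) finite_subset[OF fm VS(1)] by (meson order_trans)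
  show "\<And>s. fin_meas C (nu s)" unfolding fin_meas_def using nu0 fn VS(2) finite_subset[OF fn VS(1)] by (meson order_trans)
  show pt1: "\<And>c. c \<in> VS \<Longrightarrow> (\<Sum>s\<in>UNIV. p s * nu s c) = mu c"
  proof -
    fix c assume c: "c \<in> VS"
    have "(\<Sum>s\<in>UNIV. p s * nu s c) = (\<Sum>s\<in>UNIV. \<Sum>e\<in>Ep. y (CC (c, e)) * e$s)"
      unfolding nu using c p_pos by (simp add: sum_distrib_left less_imp_neq[symmetric])
    also have "\<dots> = (\<Sum>e\<in>Ep. y (CC (c, e)) * (\<Sum>s\<in>UNIV. e$s))"
      by (subst sum.swap) (simp add: sum_distrib_left)
    also have "\<dots> = mu c" unfolding mu using c eW by simp
    finally show "(\<Sum>s\<in>UNIV. p s * nu s c) = mu c" .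
  qed
  show pt2: "\<And>s c. nu s c \<le> mu c / (1 - \<alpha>)"
  proof -
    fix s c
    show "nu s c \<le> mu c / (1 - \<alpha>)"
    proof (cases "c \<in> VS")
      case True
      have "(\<Sum>e\<in>Ep. y (CC (c, e)) * e$s / p s) \<le> (\<Sum>e\<in>Ep. y (CC (c, e)) / (1 - \<alpha>))"
      proof (rule sum_mono)
        fix e assume e: "e \<in> Ep"
        have "e$s / p s \<le> 1 / (1 - \<alpha>)" using eW[OF e, of s] p_pos[of s] alpha
          by (simp add: divide_le_eq field_simps)
        then have "y (CC (c, e)) * (e$s / p s) \<le> y (CC (c, e)) * (1 / (1 - \<alpha>))"
          using yC[OF True e] by (rule mult_left_mono)
        then show "y (CC (c, e)) * e$s / p s \<le> y (CC (c, e)) / (1 - \<alpha>)" by simp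
      qed
      then show ?thesis unfolding nu mu using True by (simp add: sum_divide_distrib)
    next
      case False then show ?thesis unfolding nu mu by simp
    qed
  qed
  have msn: "msr (nu s) B = (\<Sum>c\<in>B \<inter> VS. nu s c)" for s B by (rule msr_superset[OF VS(1) fn])
  have msm: "msr mu B = (\<Sum>c\<in>B \<inter> VS. mu c)" for B by (rule msr_superset[OF VS(1) fm])
  show "\<forall>B\<subseteq>C. (\<Sum>s\<in>UNIV. p s * msr (nu s) B) = msr mu B"
  proof (intro allI impI)
    fix B
    have "(\<Sum>s\<in>UNIV. p s * msr (nu s) B) = (\<Sum>c\<in>B \<inter> VS. \<Sum>s\<in>UNIV. p s * nu s c)"
      unfolding msn by (simp add: sum_distrib_left sum.swap[of _ UNIV])
    also have "\<dots> = msr mu B" unfolding msm using pt1 by (intro sum.cong) auto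
    finally show "(\<Sum>s\<in>UNIV. p s * msr (nu s) B) = msr mu B" .
  qed
  show "\<forall>s. \<forall>B\<subseteq>C. msr (nu s) B \<le> msr mu B / (1 - \<alpha>)"
    unfolding msn msm sum_divide_distrib using pt2 by (auto intro: sum_mono)
qed

end

context LPsetup begin

lemma mkD_fint:
  assumes y: "\<forall>i\<in>Ix. 0 \<le> y i" and D: "mkD y = (lam, mu, nu, piv)"
  shows "p s *\<^sub>R fint (nu s) u = (\<Sum>c\<in>VS. \<Sum>e\<in>Ep. (y (CC (c, e)) * e$s) *\<^sub>R u c)"
proof -
  have nu: "nu = (\<lambda>s c. if c \<in> VS then \<Sum>e\<in>Ep. y (CC (c, e)) * e$s / p s else 0)"
    using D unfolding mkD_def by auto
  have "p s *\<^sub>R fint (nu s) u = (\<Sum>c\<in>VS. (p s * nu s c) *\<^sub>R u c)"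
    unfolding fint_superset[OF VS(1) mkD_basic(6)[OF y D]] by (simp add: scaleR_sum_right)
  also have "\<dots> = (\<Sum>c\<in>VS. (\<Sum>e\<in>Ep. y (CC (c, e)) * e$s) *\<^sub>R u c)"
  proof (rule sum.cong[OF refl])
    fix c assume "c \<in> VS"
    then have "p s * nu s c = (\<Sum>e\<in>Ep. y (CC (c, e)) * e$s)"
      unfolding nu using p_pos[of s] by (simp add: sum_distrib_left less_imp_neq[symmetric])
    then show "(p s * nu s c) *\<^sub>R u c = (\<Sum>e\<in>Ep. y (CC (c, e)) * e$s) *\<^sub>R u c" by simp
  qed
  also have "\<dots> = (\<Sum>c\<in>VS. \<Sum>e\<in>Ep. (y (CC (c, e)) * e$s) *\<^sub>R u c)" by (simp add: scaleR_sum_left)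
  finally show ?thesis .
qed

lemma ca_fst:
  "fst (ca (CA r1)) = - (A $ r1)" "fst (ca (CX j)) = axis j 1" "fst (ca (CY s k)) = 0"
  "fst (ca (CT s r)) = T s $ r" "fst (ca (CC (c, e))) = - (\<Sum>s\<in>UNIV. e$s *\<^sub>R (c v* gbar s))"
  by (simp_all add: ca_def)

lemma ca_snd:
  "snd (ca (CA r1)) = 0" "snd (ca (CX j)) = 0" "snd (ca (CY s k)) = axis s (axis k 1)"
  "snd (ca (CT s r)) = axis s (W s $ r)" "snd (ca (CC (c, e))) = - (\<chi> s. e$s *\<^sub>R (c v* gtil s))"
  by (simp_all add: ca_def)

lemma mkD_E1:
  assumes y: "\<forall>i\<in>Ix. 0 \<le> y i" and D: "mkD y = (lam, mu, nu, piv)"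
  shows "fst (\<Sum>i\<in>Ix. y i *\<^sub>R ca i) = (\<chi> j. y (CX j)) - lam v* A + (\<Sum>s\<in>UNIV. p s *\<^sub>R (piv s v* T s))
      - (\<Sum>s\<in>UNIV. p s *\<^sub>R fint (nu s) (\<lambda>c. c v* gbar s))"
proof -
  have lam: "lam = (\<chi> r. y (CA r))" and piv: "piv = (\<lambda>s. \<chi> r. y (CT s r) / p s)"
    using D unfolding mkD_def by auto
  have p1: "(\<Sum>r\<in>UNIV. y (CA r) *\<^sub>R - (A $ r)) = - (lam v* A)"
    unfolding lam vm_sum by (simp add: sum_negf)
  have p3: "(\<Sum>r\<in>UNIV. y (CT s r) *\<^sub>R T s $ r) = p s *\<^sub>R (piv s v* T s)" for s
    unfolding piv vm_sum using p_pos[of s] by (simp add: scaleR_sum_right less_imp_neq[symmetric])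
  have p4: "(\<Sum>c\<in>VS. \<Sum>e\<in>Ep. y (CC (c, e)) *\<^sub>R - (\<Sum>s\<in>UNIV. e$s *\<^sub>R (c v* gbar s)))
       = - (\<Sum>s\<in>UNIV. p s *\<^sub>R fint (nu s) (\<lambda>c. c v* gbar s))"
  proof -
    have "(\<Sum>c\<in>VS. \<Sum>e\<in>Ep. y (CC (c, e)) *\<^sub>R (\<Sum>s\<in>UNIV. e$s *\<^sub>R (c v* gbar s)))
        = (\<Sum>c\<in>VS. \<Sum>e\<in>Ep. \<Sum>s\<in>UNIV. (y (CC (c, e)) * e$s) *\<^sub>R (c v* gbar s))"
      by (simp add: scaleR_sum_right)
    also have "\<dots> = (\<Sum>c\<in>VS. \<Sum>s\<in>UNIV. \<Sum>e\<in>Ep. (y (CC (c, e)) * e$s) *\<^sub>R (c v* gbar s))"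
      by (rule sum.cong[OF refl], rule sum.swap)
    also have "\<dots> = (\<Sum>s\<in>UNIV. \<Sum>c\<in>VS. \<Sum>e\<in>Ep. (y (CC (c, e)) * e$s) *\<^sub>R (c v* gbar s))"
      by (rule sum.swap)
    also have "\<dots> = (\<Sum>s\<in>UNIV. p s *\<^sub>R fint (nu s) (\<lambda>c. c v* gbar s))"
      by (simp add: mkD_fint[OF y D])
    finally show ?thesis by (simp add: sum_negf)
  qed
  have "fst (\<Sum>i\<in>Ix. y i *\<^sub>R ca i) = (\<Sum>i\<in>Ix. y i *\<^sub>R fst (ca i))" by (simp add: fst_sum)
  also have "\<dots> = (\<Sum>r\<in>UNIV. y (CA r) *\<^sub>R fst (ca (CA r))) + (\<Sum>j\<in>UNIV. y (CX j) *\<^sub>R fst (ca (CX j)))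
     + (\<Sum>s\<in>UNIV. \<Sum>j\<in>UNIV. y (CY s j) *\<^sub>R fst (ca (CY s j)))
     + (\<Sum>s\<in>UNIV. \<Sum>r\<in>UNIV. y (CT s r) *\<^sub>R fst (ca (CT s r)))
     + (\<Sum>c\<in>VS. \<Sum>e\<in>Ep. y (CC (c, e)) *\<^sub>R fst (ca (CC (c, e))))" by (rule Ix_sum)
  also have "\<dots> = - (lam v* A) + (\<chi> j. y (CX j)) + 0 + (\<Sum>s\<in>UNIV. p s *\<^sub>R (piv s v* T s))
      + - (\<Sum>s\<in>UNIV. p s *\<^sub>R fint (nu s) (\<lambda>c. c v* gbar s))"
    unfolding ca_fst p1 p3 p4 axis_sum by simp
  finally show ?thesis by simp
qed

lemma sum_if_outer:
  fixes g :: "'z \<Rightarrow> 'v::comm_monoid_add"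
  shows "(\<Sum>x\<in>(UNIV::'q::finite set). \<Sum>z\<in>B. if x = s then g z else 0) = (\<Sum>z\<in>B. g z)"
proof -
  have "(\<Sum>x\<in>(UNIV::'q set). \<Sum>z\<in>B. if x = s then g z else 0) = (\<Sum>x\<in>(UNIV::'q set). if x = s then (\<Sum>z\<in>B. g z) else 0)"
    by (rule sum.cong) auto
  then show ?thesis by simp
qed

lemma mkD_E2:
  assumes y: "\<forall>i\<in>Ix. 0 \<le> y i" and D: "mkD y = (lam, mu, nu, piv)"
  shows "snd (\<Sum>i\<in>Ix. y i *\<^sub>R ca i) $ s = (\<chi> j. y (CY s j)) + p s *\<^sub>R (piv s v* W s)
      - p s *\<^sub>R fint (nu s) (\<lambda>c. c v* gtil s)"
proof -
  have piv: "piv = (\<lambda>s. \<chi> r. y (CT s r) / p s)"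
    using D unfolding mkD_def by auto
  have ax: "axis s' v $ s = (if s' = s then v else 0)" for s' and v :: "real^'z::finite"
    by (simp add: axis_def)
  have p2: "(\<Sum>s'\<in>UNIV. \<Sum>j\<in>UNIV. y (CY s' j) *\<^sub>R axis s' (axis j 1)) $ s = (\<chi> j. y (CY s j))"
  proof -
    have "(\<Sum>s'\<in>UNIV. \<Sum>j\<in>UNIV. y (CY s' j) *\<^sub>R axis s' (axis j (1::real))) $ s
        = (\<Sum>s'\<in>UNIV. \<Sum>j\<in>UNIV. if s' = s then y (CY s j) *\<^sub>R axis j 1 else 0)"
      by (simp add: sum_component ax if_distrib cong: if_cong)
    also have "\<dots> = (\<chi> j. y (CY s j))" by (simp only: sum_if_outer axis_sum)
    finally show ?thesis .
  qed
  have p3: "(\<Sum>s'\<in>UNIV. \<Sum>r\<in>UNIV. y (CT s' r) *\<^sub>R axis s' (W s' $ r)) $ s = p s *\<^sub>R (piv s v* W s)"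
  proof -
    have "(\<Sum>s'\<in>UNIV. \<Sum>r\<in>UNIV. y (CT s' r) *\<^sub>R axis s' (W s' $ r)) $ s
        = (\<Sum>s'\<in>UNIV. \<Sum>r\<in>UNIV. if s' = s then y (CT s r) *\<^sub>R W s $ r else 0)"
      by (simp add: sum_component ax if_distrib cong: if_cong)
    also have "\<dots> = (\<Sum>r\<in>UNIV. y (CT s r) *\<^sub>R W s $ r)" by (simp only: sum_if_outer)
    also have "\<dots> = p s *\<^sub>R (piv s v* W s)"
      unfolding piv vm_sum using p_pos[of s] by (simp add: scaleR_sum_right less_imp_neq[symmetric])
    finally show ?thesis .
  qed
  have p4: "(\<Sum>c\<in>VS. \<Sum>e\<in>Ep. y (CC (c, e)) *\<^sub>R - (\<chi> s. e$s *\<^sub>R (c v* gtil s))) $ s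
       = - (p s *\<^sub>R fint (nu s) (\<lambda>c. c v* gtil s))"
    by (simp add: sum_component mkD_fint[OF y D] sum_negf)
  have "snd (\<Sum>i\<in>Ix. y i *\<^sub>R ca i) = (\<Sum>i\<in>Ix. y i *\<^sub>R snd (ca i))" by (simp add: snd_sum)
  also have "\<dots> = (\<Sum>r\<in>UNIV. y (CA r) *\<^sub>R snd (ca (CA r))) + (\<Sum>j\<in>UNIV. y (CX j) *\<^sub>R snd (ca (CX j)))
     + (\<Sum>s\<in>UNIV. \<Sum>j\<in>UNIV. y (CY s j) *\<^sub>R snd (ca (CY s j)))
     + (\<Sum>s\<in>UNIV. \<Sum>r\<in>UNIV. y (CT s r) *\<^sub>R snd (ca (CT s r)))
     + (\<Sum>c\<in>VS. \<Sum>e\<in>Ep. y (CC (c, e)) *\<^sub>R snd (ca (CC (c, e))))" by (rule Ix_sum)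
  finally have calc: "snd (\<Sum>i\<in>Ix. y i *\<^sub>R ca i) $ s = (\<Sum>r\<in>UNIV. y (CA r) *\<^sub>R snd (ca (CA r))) $ s + (\<Sum>j\<in>UNIV. y (CX j) *\<^sub>R snd (ca (CX j))) $ s
     + (\<Sum>s\<in>UNIV. \<Sum>j\<in>UNIV. y (CY s j) *\<^sub>R snd (ca (CY s j))) $ s
     + (\<Sum>s\<in>UNIV. \<Sum>r\<in>UNIV. y (CT s r) *\<^sub>R snd (ca (CT s r))) $ s
     + (\<Sum>c\<in>VS. \<Sum>e\<in>Ep. y (CC (c, e)) *\<^sub>R snd (ca (CC (c, e)))) $ s"
    by (simp only: vector_add_component)
  show ?thesis unfolding calc ca_snd p2 p3 p4 by simp
qed

lemma mkD_E3:
  assumes y: "\<forall>i\<in>Ix. 0 \<le> y i" and D: "mkD y = (lam, mu, nu, piv)"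
  shows "(\<Sum>i\<in>Ix. y i * cb i) = oD (lam, mu, nu, piv)"
proof -
  have lam: "lam = (\<chi> r. y (CA r))" and piv: "piv = (\<lambda>s. \<chi> r. y (CT s r) / p s)"
    and mu: "mu = (\<lambda>c. if c \<in> VS then \<Sum>e\<in>Ep. y (CC (c, e)) else 0)"
    using D unfolding mkD_def by auto
  have q1: "(\<Sum>r\<in>UNIV. y (CA r) * - (b $ r)) = - (lam \<bullet> b)"
    unfolding lam by (simp add: inner_vec_def sum_negf)
  have q3: "(\<Sum>r\<in>UNIV. y (CT s r) * h s $ r) = p s * (piv s \<bullet> h s)" for s
    unfolding piv inner_vec_def using p_pos[of s] by (simp add: sum_distrib_left less_imp_neq[symmetric])
  have q4: "(\<Sum>c\<in>VS. \<Sum>e\<in>Ep. y (CC (c, e)) * - rZ c) = - fint mu rZ"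
  proof -
    have "fint mu rZ = (\<Sum>c\<in>VS. mu c * rZ c)"
      unfolding fint_superset[OF VS(1) mkD_basic(5)[OF y D]] by simp
    also have "\<dots> = (\<Sum>c\<in>VS. \<Sum>e\<in>Ep. y (CC (c, e)) * rZ c)"
      unfolding mu by (simp add: sum_distrib_right)
    finally show ?thesis by (simp add: sum_negf)
  qed
  have cbs: "cb (CA r1) = - (b $ r1)" "cb (CX j) = 0" "cb (CY s k) = 0" "cb (CT s r) = h s $ r"
     "cb (CC (c, e)) = - rZ c" for r1 j s k r c e by (simp_all add: cb_def)
  have "(\<Sum>i\<in>Ix. y i * cb i) = - (lam \<bullet> b) + 0 + 0 + (\<Sum>s\<in>UNIV. p s * (piv s \<bullet> h s)) + - fint mu rZ"
    unfolding Ix_sum cbs q1 q3 q4 by simp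
  then show ?thesis by (simp add: objD_def)
qed

end

lemma vm_lin: "((a::real^'m::finite) + t *\<^sub>R b) v* (M::real^'n::finite^'m) = a v* M + t *\<^sub>R (b v* M)"
  by (simp add: vm_sum algebra_simps sum.distrib scaleR_sum_right)

lemma fsupp_lin: "fsupp (\<lambda>c. a c + t * b c) \<subseteq> fsupp a \<union> fsupp b"
  unfolding fsupp_def by auto

lemma fint_lin:
  assumes "finite (fsupp a)" "finite (fsupp b)"
  shows "fint (\<lambda>c. a c + t * b c) u = fint a u + t *\<^sub>R fint b u"
proof -
  let ?F = "fsupp a \<union> fsupp b"
  have fin: "finite ?F" using assms by simp
  show ?thesis
    unfolding fint_superset[OF fin fsupp_lin] fint_superset[OF fin Un_upper1] fint_superset[OF fin Un_upper2]
    by (simp add: scaleR_add_left sum.distrib scaleR_sum_right)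
qed

lemma msr_lin:
  assumes "finite (fsupp a)" "finite (fsupp b)"
  shows "msr (\<lambda>c. a c + t * b c) B = msr a B + t * msr b B"
proof -
  let ?F = "fsupp a \<union> fsupp b"
  have fin: "finite ?F" using assms by simp
  show ?thesis
    unfolding msr_superset[OF fin fsupp_lin] msr_superset[OF fin Un_upper1] msr_superset[OF fin Un_upper2]
    by (simp add: sum.distrib sum_distrib_left)
qed

context LPsetup begin

lemma weak:
  assumes "xy \<in> FP" "D \<in> FD" shows "oD D \<le> oP xy"
proof -
  obtain x y where xy: "xy = (x, y)" by (cases xy)
  obtain lam mu nu piv where D: "D = (lam, mu, nu, piv)" by (cases D) auto
  show ?thesis using cs_main(1)[of x y lam mu nu piv] assms unfolding xy D by blast
qed

lemma strong:
  assumes xy0: "(x0, y0) \<in> FP" and bnd: "\<forall>xy\<in>FP. m \<le> oP xy"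
  shows "\<exists>D\<in>FD. m \<le> oD D"
proof -
  have eta: "(\<lambda>s. (\<chi> s. y0 s) $ s) = y0" by simp
  have feas0: "\<forall>i\<in>Ix. cb i \<le> ca i \<bullet> (x0, \<chi> s. y0 s)"
    unfolding LP_feas eta by (rule xy0)
  have "\<exists>y. (\<forall>i\<in>Ix. 0 \<le> y i) \<and> (\<Sum>i\<in>Ix. y i *\<^sub>R ca i) = cg \<and> m \<le> (\<Sum>i\<in>Ix. y i * cb i)"
  proof (rule farkas_affine[OF Ix_finite feas0])
    fix v :: "(real^'n1) \<times> (real^'n2^'s)" assume H: "\<forall>i\<in>Ix. cb i \<le> ca i \<bullet> v"
    obtain x Y where v: "v = (x, Y)" by (cases v)
    have "(x, \<lambda>s. Y$s) \<in> FP" using H unfolding v LP_feas .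
    then show "m \<le> cg \<bullet> v" unfolding v cg_inner using bnd by blast
  qed
  then obtain y where y: "\<forall>i\<in>Ix. 0 \<le> y i" "(\<Sum>i\<in>Ix. y i *\<^sub>R ca i) = cg" "m \<le> (\<Sum>i\<in>Ix. y i * cb i)"
    by blast
  obtain lam mu nu piv where D: "mkD y = (lam, mu, nu, piv)" by (metis prod_cases4)
  note B = mkD_basic[OF y(1) D]
  have E1: "f = (\<chi> j. y (CX j)) - lam v* A + (\<Sum>s\<in>UNIV. p s *\<^sub>R (piv s v* T s))
      - (\<Sum>s\<in>UNIV. p s *\<^sub>R fint (nu s) (\<lambda>c. c v* gbar s))"
    using mkD_E1[OF y(1) D] y(2) by (simp add: cg_def)
  have E2: "p s *\<^sub>R q s = (\<chi> j. y (CY s j)) + p s *\<^sub>R (piv s v* W s)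
      - p s *\<^sub>R fint (nu s) (\<lambda>c. c v* gtil s)" for s
    using mkD_E2[OF y(1) D, of s] y(2) by (simp add: cg_def)
  have yX: "0 \<le> y (CX j)" for j using y(1) unfolding Ix_ball by blast
  have yY: "0 \<le> y (CY s j)" for s j using y(1) unfolding Ix_ball by blast
  have d3: "((\<Sum>s\<in>UNIV. p s *\<^sub>R (piv s v* T s))
              - (\<Sum>s\<in>UNIV. p s *\<^sub>R fint (nu s) (\<lambda>c. c v* gbar s))) $ j \<le> (f + lam v* A) $ j" for j
  proof -
    have "f $ j = y (CX j) - (lam v* A) $ j + ((\<Sum>s\<in>UNIV. p s *\<^sub>R (piv s v* T s))
              - (\<Sum>s\<in>UNIV. p s *\<^sub>R fint (nu s) (\<lambda>c. c v* gbar s))) $ j"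
      using arg_cong[OF E1, of "\<lambda>v. v $ j"] by simp
    then show ?thesis using yX[of j] by simp
  qed
  have d4: "(piv s v* W s - fint (nu s) (\<lambda>c. c v* gtil s)) $ j \<le> q s $ j" for s j
  proof -
    have "p s * q s $ j = y (CY s j) + p s * (piv s v* W s - fint (nu s) (\<lambda>c. c v* gtil s)) $ j"
      using arg_cong[OF E2[of s], of "\<lambda>v. v $ j"] by (simp add: algebra_simps)
    then have "p s * (piv s v* W s - fint (nu s) (\<lambda>c. c v* gtil s)) $ j \<le> p s * q s $ j"
      using yY[of s j] by linarith
    then show ?thesis using p_pos[of s] by simp
  qed
  have "(lam, mu, nu, piv) \<in> FD"
    unfolding feasD_def using B d3 d4 by auto
  moreover have "m \<le> oD (lam, mu, nu, piv)" using y(3) mkD_E3[OF y(1) D] by simp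
  ultimately show ?thesis by blast
qed

end

lemma vm_scale: "(t *\<^sub>R (b::real^'m::finite)) v* (M::real^'n::finite^'m) = t *\<^sub>R (b v* M)"
  by (simp add: vm_sum scaleR_sum_right)

context LPsetup begin

lemma ray:
  assumes FPe: "FP = {}" and D0: "(l0, m0, n0, p0) \<in> FD"
  shows "\<not> bdd_above (oD ` FD)"
proof -
  have inf: "\<not> (\<exists>v. \<forall>i\<in>Ix. cb i \<le> ca i \<bullet> v)"
  proof
    assume "\<exists>v. \<forall>i\<in>Ix. cb i \<le> ca i \<bullet> v"
    then obtain x Y where "\<forall>i\<in>Ix. cb i \<le> ca i \<bullet> (x, Y)" by auto
    then have "(x, \<lambda>s. Y$s) \<in> FP" unfolding LP_feas .
    then show False using FPe by simp
  qed
  obtain y where y: "\<forall>i\<in>Ix. 0 \<le> y i" "(\<Sum>i\<in>Ix. y i *\<^sub>R ca i) = 0" "0 < (\<Sum>i\<in>Ix. y i * cb i)"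
    using farkas_infeas[OF Ix_finite inf] by blast
  obtain lr mr nr pr where D: "mkD y = (lr, mr, nr, pr)" by (metis prod_cases4)
  note B = mkD_basic[OF y(1) D]
  note DF = FD_facts[OF D0]
  define \<delta> where "\<delta> = oD (lr, mr, nr, pr)"
  have d0: "0 < \<delta>" unfolding \<delta>_def using y(3) mkD_E3[OF y(1) D] by simp
  have E1: "(\<Sum>s\<in>UNIV. p s *\<^sub>R (pr s v* T s)) - (\<Sum>s\<in>UNIV. p s *\<^sub>R fint (nr s) (\<lambda>c. c v* gbar s))
      = lr v* A - (\<chi> j. y (CX j))"
    using mkD_E1[OF y(1) D] y(2) by (simp add: algebra_simps)
  have E2: "p s *\<^sub>R (pr s v* W s - fint (nr s) (\<lambda>c. c v* gtil s)) = - (\<chi> j. y (CY s j))" for s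
    using mkD_E2[OF y(1) D, of s] y(2) by (simp add: algebra_simps)
  have yX: "0 \<le> y (CX j)" for j using y(1) unfolding Ix_ball by blast
  have yY: "0 \<le> y (CY s j)" for s j using y(1) unfolding Ix_ball by blast
  have mr_fin: "finite (fsupp mr)" "fsupp mr \<subseteq> C" "\<And>c. 0 \<le> mr c" using B(2) unfolding fin_meas_def by auto
  have nr_fin: "finite (fsupp (nr s))" "fsupp (nr s) \<subseteq> C" "\<And>c. 0 \<le> nr s c" for s
    using B(3)[of s] unfolding fin_meas_def by auto
  define Dt where "Dt t = (l0 + t *\<^sub>R lr, \<lambda>c. m0 c + t * mr c, \<lambda>s c. n0 s c + t * nr s c, \<lambda>s. p0 s + t *\<^sub>R pr s)"
    for t :: real
  have mem: "Dt t \<in> FD" if t: "0 \<le> t" for t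
  proof -
    have a: "\<forall>i. 0 \<le> (l0 + t *\<^sub>R lr) $ i" using DF(1) B(1) t by simp
    have b: "fin_meas C (\<lambda>c. m0 c + t * mr c)"
      unfolding fin_meas_def using DF(2,3,4) mr_fin t fsupp_lin[of m0 t mr]
      by (auto intro: finite_subset)
    have c: "\<forall>s. fin_meas C (\<lambda>c. n0 s c + t * nr s c)"
    proof
      fix s
      have fs: "fsupp (\<lambda>c. n0 s c + t * nr s c) \<subseteq> fsupp (n0 s) \<union> fsupp (nr s)" by (rule fsupp_lin)
      show "fin_meas C (\<lambda>c. n0 s c + t * nr s c)"
        unfolding fin_meas_def using DF(5)[of s] DF(6)[of s] DF(7)[of s] nr_fin[of s] t fs
        by (auto intro: finite_subset)
    qed
    have d: "\<forall>s i. 0 \<le> (p0 s + t *\<^sub>R pr s) $ i" using DF(8) B(4) t by simp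
    have e: "\<forall>B\<subseteq>C. (\<Sum>s\<in>UNIV. p s * msr (\<lambda>c. n0 s c + t * nr s c) B) = msr (\<lambda>c. m0 c + t * mr c) B"
    proof (intro allI impI)
      fix Bs assume Bs: "Bs \<subseteq> C"
      have e0: "(\<Sum>s\<in>UNIV. p s * msr (n0 s) Bs) = msr m0 Bs"
        using D0 Bs unfolding feasD_def by auto
      have er: "(\<Sum>s\<in>UNIV. p s * msr (nr s) Bs) = msr mr Bs" using B(9) Bs by blast
      show "(\<Sum>s\<in>UNIV. p s * msr (\<lambda>c. n0 s c + t * nr s c) Bs) = msr (\<lambda>c. m0 c + t * mr c) Bs"
        unfolding msr_lin[OF DF(6) nr_fin(1)] msr_lin[OF DF(3) mr_fin(1)]
        using e0 er by (simp add: algebra_simps sum.distrib sum_distrib_left[symmetric])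
    qed
    have f: "\<forall>s. \<forall>B\<subseteq>C. msr (\<lambda>c. n0 s c + t * nr s c) B \<le> msr (\<lambda>c. m0 c + t * mr c) B / (1 - \<alpha>)"
    proof (intro allI impI)
      fix s Bs assume Bs: "Bs \<subseteq> C"
      have f0: "msr (n0 s) Bs \<le> msr m0 Bs / (1 - \<alpha>)" using D0 Bs unfolding feasD_def by auto
      have fr: "msr (nr s) Bs \<le> msr mr Bs / (1 - \<alpha>)" using B(10) Bs by blast
      have "t * msr (nr s) Bs \<le> t * (msr mr Bs / (1 - \<alpha>))" using fr t by (rule mult_left_mono)
      then show "msr (\<lambda>c. n0 s c + t * nr s c) Bs \<le> msr (\<lambda>c. m0 c + t * mr c) Bs / (1 - \<alpha>)"
        unfolding msr_lin[OF DF(6) nr_fin(1)] msr_lin[OF DF(3) mr_fin(1)]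
        using f0 by (simp add: add_divide_distrib)
    qed
    have g: "\<forall>j. ((\<Sum>s\<in>UNIV. p s *\<^sub>R ((p0 s + t *\<^sub>R pr s) v* T s))
              - (\<Sum>s\<in>UNIV. p s *\<^sub>R fint (\<lambda>c. n0 s c + t * nr s c) (\<lambda>c. c v* gbar s))) $ j
            \<le> (f + (l0 + t *\<^sub>R lr) v* A) $ j"
    proof
      fix j
      have "(\<Sum>s\<in>UNIV. p s *\<^sub>R ((p0 s + t *\<^sub>R pr s) v* T s))
              - (\<Sum>s\<in>UNIV. p s *\<^sub>R fint (\<lambda>c. n0 s c + t * nr s c) (\<lambda>c. c v* gbar s))
          = ((\<Sum>s\<in>UNIV. p s *\<^sub>R (p0 s v* T s)) - (\<Sum>s\<in>UNIV. p s *\<^sub>R fint (n0 s) (\<lambda>c. c v* gbar s)))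
            + t *\<^sub>R ((\<Sum>s\<in>UNIV. p s *\<^sub>R (pr s v* T s)) - (\<Sum>s\<in>UNIV. p s *\<^sub>R fint (nr s) (\<lambda>c. c v* gbar s)))"
        unfolding vm_lin fint_lin[OF DF(6) nr_fin(1)]
        by (simp add: scaleR_add_right sum.distrib scaleR_sum_right algebra_simps)
      also have "\<dots> = ((\<Sum>s\<in>UNIV. p s *\<^sub>R (p0 s v* T s)) - (\<Sum>s\<in>UNIV. p s *\<^sub>R fint (n0 s) (\<lambda>c. c v* gbar s)))
            + t *\<^sub>R (lr v* A - (\<chi> j. y (CX j)))" unfolding E1 ..
      finally have eqv: "(\<Sum>s\<in>UNIV. p s *\<^sub>R ((p0 s + t *\<^sub>R pr s) v* T s))
              - (\<Sum>s\<in>UNIV. p s *\<^sub>R fint (\<lambda>c. n0 s c + t * nr s c) (\<lambda>c. c v* gbar s))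
          = ((\<Sum>s\<in>UNIV. p s *\<^sub>R (p0 s v* T s)) - (\<Sum>s\<in>UNIV. p s *\<^sub>R fint (n0 s) (\<lambda>c. c v* gbar s)))
            + t *\<^sub>R (lr v* A - (\<chi> j. y (CX j)))" .
      have eq: "((\<Sum>s\<in>UNIV. p s *\<^sub>R ((p0 s + t *\<^sub>R pr s) v* T s))
              - (\<Sum>s\<in>UNIV. p s *\<^sub>R fint (\<lambda>c. n0 s c + t * nr s c) (\<lambda>c. c v* gbar s))) $ j
          = ((\<Sum>s\<in>UNIV. p s *\<^sub>R (p0 s v* T s)) - (\<Sum>s\<in>UNIV. p s *\<^sub>R fint (n0 s) (\<lambda>c. c v* gbar s))) $ j
            + t * ((lr v* A) $ j - y (CX j))"
        unfolding eqv by (simp only: vector_add_component vector_scaleR_component vector_minus_component vec_lambda_beta real_scaleR_def)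
      have "t * y (CX j) \<ge> 0" using t yX by simp
      then show "((\<Sum>s\<in>UNIV. p s *\<^sub>R ((p0 s + t *\<^sub>R pr s) v* T s))
              - (\<Sum>s\<in>UNIV. p s *\<^sub>R fint (\<lambda>c. n0 s c + t * nr s c) (\<lambda>c. c v* gbar s))) $ j
            \<le> (f + (l0 + t *\<^sub>R lr) v* A) $ j"
      proof -
        have r: "(f + (l0 + t *\<^sub>R lr) v* A) $ j = (f + l0 v* A) $ j + t * (lr v* A) $ j"
          by (simp add: vm_lin vm_scale algebra_simps)
        have m: "t * ((lr v* A) $ j - y (CX j)) = t * (lr v* A) $ j - t * y (CX j)"
          by (simp add: right_diff_distrib)
        show ?thesis unfolding eq r m using DF(12)[of j] \<open>t * y (CX j) \<ge> 0\<close> by linarith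
      qed
    qed
    have h: "\<forall>s j. ((p0 s + t *\<^sub>R pr s) v* W s - fint (\<lambda>c. n0 s c + t * nr s c) (\<lambda>c. c v* gtil s)) $ j \<le> q s $ j"
    proof (intro allI)
      fix s j
      have eqh: "(p0 s + t *\<^sub>R pr s) v* W s - fint (\<lambda>c. n0 s c + t * nr s c) (\<lambda>c. c v* gtil s)
          = (p0 s v* W s - fint (n0 s) (\<lambda>c. c v* gtil s)) + t *\<^sub>R (pr s v* W s - fint (nr s) (\<lambda>c. c v* gtil s))"
        unfolding vm_lin fint_lin[OF DF(6) nr_fin(1)] by (simp add: algebra_simps)
      have neg: "(pr s v* W s - fint (nr s) (\<lambda>c. c v* gtil s)) $ j \<le> 0"
      proof -
        have "p s * (pr s v* W s - fint (nr s) (\<lambda>c. c v* gtil s)) $ j = - y (CY s j)"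
          using arg_cong[OF E2[of s], of "\<lambda>v. v $ j"] by simp
        then have "p s * (pr s v* W s - fint (nr s) (\<lambda>c. c v* gtil s)) $ j \<le> 0" using yY[of s j] by simp
        then show ?thesis using p_pos[of s] by (simp add: mult_le_0_iff)
      qed
      have tn: "t * (pr s v* W s - fint (nr s) (\<lambda>c. c v* gtil s)) $ j \<le> 0"
        using t neg by (rule mult_nonneg_nonpos)
      have cp: "((p0 s + t *\<^sub>R pr s) v* W s - fint (\<lambda>c. n0 s c + t * nr s c) (\<lambda>c. c v* gtil s)) $ j
         = (p0 s v* W s - fint (n0 s) (\<lambda>c. c v* gtil s)) $ j + t * (pr s v* W s - fint (nr s) (\<lambda>c. c v* gtil s)) $ j"
        unfolding eqh by (simp only: vector_add_component vector_scaleR_component real_scaleR_def)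
      show "((p0 s + t *\<^sub>R pr s) v* W s - fint (\<lambda>c. n0 s c + t * nr s c) (\<lambda>c. c v* gtil s)) $ j \<le> q s $ j"
        unfolding cp using DF(13)[of s j] tn by linarith
    qed
    show ?thesis unfolding Dt_def feasD_def using a b c d e f g h by simp
  qed
  have val: "oD (Dt t) = oD (l0, m0, n0, p0) + t * \<delta>" for t
    unfolding Dt_def \<delta>_def objD_def
    by (simp add: fint_lin[OF DF(3) mr_fin(1)] inner_add_left algebra_simps sum.distrib sum_distrib_left)
  show ?thesis
  proof
    assume "bdd_above (oD ` FD)"
    then obtain M where M: "\<And>D. D \<in> FD \<Longrightarrow> oD D \<le> M" by (auto simp: bdd_above_def)
    define t where "t = (\<bar>M\<bar> + \<bar>oD (l0, m0, n0, p0)\<bar> + 1) / \<delta>"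
    have t0: "0 \<le> t" unfolding t_def using d0 by simp
    have "oD (Dt t) = oD (l0, m0, n0, p0) + (\<bar>M\<bar> + \<bar>oD (l0, m0, n0, p0)\<bar> + 1)"
      unfolding val t_def using d0 by simp
    moreover have "oD (Dt t) \<le> M" using M mem[OF t0] by blast
    ultimately show False by linarith
  qed
qed

end

context LPsetup begin

lemma main:
  shows
    "((FP \<noteq> {} \<and> bdd_below (oP ` FP)) \<longleftrightarrow> (FD \<noteq> {} \<and> bdd_above (oD ` FD)))
     \<and> ((FP \<noteq> {} \<and> bdd_below (oP ` FP)) \<longrightarrow> Inf (oP ` FP) = Sup (oD ` FD))
     \<and> (\<forall>x y lam mu nu piv. (x, y) \<in> FP \<longrightarrow> (lam, mu, nu, piv) \<in> FD \<longrightarrow>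
          ((\<forall>xy'\<in>FP. oP (x, y) \<le> oP xy') \<and> (\<forall>D'\<in>FD. oD D' \<le> oD (lam, mu, nu, piv))
           \<longleftrightarrow>
           (support C mu \<subseteq> {c. cvar p \<alpha> (\<lambda>s. c \<bullet> ghat gbar gtil x y s) = cvar qZ \<alpha> (\<lambda>k. c \<bullet> z k)})
           \<and> (\<forall>s. support C (nu s) \<subseteq>
                 {c. var p \<alpha> (\<lambda>s'. c \<bullet> ghat gbar gtil x y s') \<le> ereal (c \<bullet> ghat gbar gtil x y s)})
           \<and> (\<forall>s. support C (\<lambda>c. mu c / (1 - \<alpha>) - nu s c) \<subseteq>
                 {c. ereal (c \<bullet> ghat gbar gtil x y s) \<le> var p \<alpha> (\<lambda>s'. c \<bullet> ghat gbar gtil x y s')})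
           \<and> lam \<bullet> (b - A *v x) = 0
           \<and> (\<forall>s. piv s \<bullet> (T s *v x + W s *v y s - h s) = 0)
           \<and> (f + lam v* A - (\<Sum>s\<in>UNIV. p s *\<^sub>R (piv s v* T s))
                + (\<Sum>s\<in>UNIV. p s *\<^sub>R fint (nu s) (\<lambda>c. c v* gbar s))) \<bullet> x = 0
           \<and> (\<forall>s. (q s - piv s v* W s + fint (nu s) (\<lambda>c. c v* gtil s)) \<bullet> y s = 0)))"
proof -
  have A: "FD \<noteq> {} \<and> bdd_above (oD ` FD) \<and> Inf (oP ` FP) = Sup (oD ` FD)"
    if H: "FP \<noteq> {}" "bdd_below (oP ` FP)"
  proof -
    obtain x0 y0 where xy0: "(x0, y0) \<in> FP" using H(1) by auto
    define m where "m = Inf (oP ` FP)"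
    have low: "\<forall>xy\<in>FP. m \<le> oP xy" unfolding m_def using H(2) by (auto intro: cInf_lower)
    obtain Ds where Ds: "Ds \<in> FD" "m \<le> oD Ds" using strong[OF xy0 low] by blast
    have bdd: "bdd_above (oD ` FD)" by (rule bdd_aboveI2[where M="oP (x0, y0)"]) (rule weak[OF xy0])
    have "Sup (oD ` FD) \<le> m"
    proof (rule cSup_least)
      show "oD ` FD \<noteq> {}" using Ds by auto
      fix v assume "v \<in> oD ` FD"
      then obtain D where D: "D \<in> FD" "v = oD D" by auto
      show "v \<le> m" unfolding m_def D(2) using H(1) weak[OF _ D(1)] by (auto intro: cInf_greatest)
    qed
    moreover have "m \<le> Sup (oD ` FD)"
      using Ds cSup_upper[OF _ bdd, of "oD Ds"] by auto
    ultimately show ?thesis using Ds bdd unfolding m_def by auto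
  qed
  have B: "FP \<noteq> {} \<and> bdd_below (oP ` FP)" if H: "FD \<noteq> {}" "bdd_above (oD ` FD)"
  proof -
    obtain l0 m0 n0 p0 where D0: "(l0, m0, n0, p0) \<in> FD" using H(1) by (metis ex_in_conv prod_cases4)
    have "FP \<noteq> {}" using ray[OF _ D0] H(2) by blast
    moreover have "bdd_below (oP ` FP)" by (rule bdd_belowI2[where m="oD (l0, m0, n0, p0)"]) (rule weak[OF _ D0])
    ultimately show ?thesis by blast
  qed
  have C: "((\<forall>xy'\<in>FP. oP (x, y) \<le> oP xy') \<and> (\<forall>D'\<in>FD. oD D' \<le> oD (lam, mu, nu, piv)))
       \<longleftrightarrow> oP (x, y) = oD (lam, mu, nu, piv)"
    if xy: "(x, y) \<in> FP" and D: "(lam, mu, nu, piv) \<in> FD" for x y lam mu nu piv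
  proof
    assume opt: "(\<forall>xy'\<in>FP. oP (x, y) \<le> oP xy') \<and> (\<forall>D'\<in>FD. oD D' \<le> oD (lam, mu, nu, piv))"
    have ne: "FP \<noteq> {}" using xy by auto
    have bb: "bdd_below (oP ` FP)" by (rule bdd_belowI2[where m="oD (lam, mu, nu, piv)"]) (rule weak[OF _ D])
    have eq: "Inf (oP ` FP) = Sup (oD ` FD)" using A[OF ne bb] by blast
    have "Inf (oP ` FP) = oP (x, y)" by (rule cInf_eq_minimum) (use xy opt in auto)
    moreover have "Sup (oD ` FD) = oD (lam, mu, nu, piv)" by (rule cSup_eq_maximum) (use D opt in auto)
    ultimately show "oP (x, y) = oD (lam, mu, nu, piv)" using eq by simp
  next
    assume e: "oP (x, y) = oD (lam, mu, nu, piv)"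
    show "(\<forall>xy'\<in>FP. oP (x, y) \<le> oP xy') \<and> (\<forall>D'\<in>FD. oD D' \<le> oD (lam, mu, nu, piv))"
      using weak[OF _ D] weak[OF xy] e by auto
  qed
  show ?thesis
  proof (intro conjI allI impI)
    show "(FP \<noteq> {} \<and> bdd_below (oP ` FP)) = (FD \<noteq> {} \<and> bdd_above (oD ` FD))"
    proof
      assume "FP \<noteq> {} \<and> bdd_below (oP ` FP)"
      then show "FD \<noteq> {} \<and> bdd_above (oD ` FD)" using A by (elim conjE) metis
    next
      assume "FD \<noteq> {} \<and> bdd_above (oD ` FD)"
      then show "FP \<noteq> {} \<and> bdd_below (oP ` FP)" using B by (elim conjE) metis
    qed
  next
    assume "FP \<noteq> {} \<and> bdd_below (oP ` FP)"
    then show "Inf (oP ` FP) = Sup (oD ` FD)" using A by (elim conjE) metis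
  qed (rule trans[OF C cs_main(2)]; assumption)
qed

end

theorem theorem1:
  fixes p :: "'s::finite \<Rightarrow> real" and \<alpha> :: real
    and qZ :: "'k::finite \<Rightarrow> real" and z :: "'k \<Rightarrow> real^'d::finite"
    and C :: "(real^'d) set"
    and A :: "real^'n1::finite^'m1::finite" and b :: "real^'m1" and f :: "real^'n1"
    and q :: "'s \<Rightarrow> real^'n2::finite" and T :: "'s \<Rightarrow> real^'n1^'m2::finite"
    and W :: "'s \<Rightarrow> real^'n2^'m2" and h :: "'s \<Rightarrow> real^'m2"
    and gbar :: "'s \<Rightarrow> real^'n1^'d" and gtil :: "'s \<Rightarrow> real^'n2^'d"
  assumes p_pos: "\<And>s. 0 < p s" and p_sum: "(\<Sum>s\<in>UNIV. p s) = 1"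
    and qZ_nonneg: "\<And>k. 0 \<le> qZ k" and qZ_sum: "(\<Sum>k\<in>UNIV. qZ k) = 1"
    and alpha: "0 \<le> \<alpha>" "\<alpha> < 1"
    and C_poly: "polyhedron C" and C_ne: "C \<noteq> {}" and C_simplex: "C \<subseteq> unit_simplex"
  defines "FP \<equiv> feasP p \<alpha> C qZ z A b T W h gbar gtil"
    and "FD \<equiv> feasD p \<alpha> C A f q T W gbar gtil"
    and "oP \<equiv> objP p f q"
    and "oD \<equiv> objD p \<alpha> qZ z b h"
  shows
    "((FP \<noteq> {} \<and> bdd_below (oP ` FP)) \<longleftrightarrow> (FD \<noteq> {} \<and> bdd_above (oD ` FD)))
     \<and> ((FP \<noteq> {} \<and> bdd_below (oP ` FP)) \<longrightarrow> Inf (oP ` FP) = Sup (oD ` FD))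
     \<and> (\<forall>x y lam mu nu piv. (x, y) \<in> FP \<longrightarrow> (lam, mu, nu, piv) \<in> FD \<longrightarrow>
          ((\<forall>xy'\<in>FP. oP (x, y) \<le> oP xy') \<and> (\<forall>D'\<in>FD. oD D' \<le> oD (lam, mu, nu, piv))
           \<longleftrightarrow>
           (support C mu \<subseteq> {c. cvar p \<alpha> (\<lambda>s. c \<bullet> ghat gbar gtil x y s) = cvar qZ \<alpha> (\<lambda>k. c \<bullet> z k)})
           \<and> (\<forall>s. support C (nu s) \<subseteq>
                 {c. var p \<alpha> (\<lambda>s'. c \<bullet> ghat gbar gtil x y s') \<le> ereal (c \<bullet> ghat gbar gtil x y s)})
           \<and> (\<forall>s. support C (\<lambda>c. mu c / (1 - \<alpha>) - nu s c) \<subseteq>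
                 {c. ereal (c \<bullet> ghat gbar gtil x y s) \<le> var p \<alpha> (\<lambda>s'. c \<bullet> ghat gbar gtil x y s')})
           \<and> lam \<bullet> (b - A *v x) = 0
           \<and> (\<forall>s. piv s \<bullet> (T s *v x + W s *v y s - h s) = 0)
           \<and> (f + lam v* A - (\<Sum>s\<in>UNIV. p s *\<^sub>R (piv s v* T s))
                + (\<Sum>s\<in>UNIV. p s *\<^sub>R fint (nu s) (\<lambda>c. c v* gbar s))) \<bullet> x = 0
           \<and> (\<forall>s. (q s - piv s v* W s + fint (nu s) (\<lambda>c. c v* gtil s)) \<bullet> y s = 0)))"
  proof -
  have L: "LPsetup p \<alpha> qZ C"
    unfolding LPsetup_def using p_pos p_sum qZ_nonneg qZ_sum alpha C_poly C_ne C_simplex by blast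
  show ?thesis unfolding FP_def FD_def oP_def oD_def by (rule LPsetup.main[OF L])
qed

end
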